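(* Let $p,l$ be distinct odd primes and let $\Gamma$, $\Gamma_p$, $\ell$, $n(\cdot)$ be as in the context. Let $a=\psi(x)\in\Gamma_p\setminus\{1\}$ with $x\in\tilde\Gamma$, and let $n=n(x)$. The following are equivalent: (a) $p\nmid n$; (b) $\ell(a^2)=2\ell(a)$; (c) $\left(\frac{-n}{p}\right)=1$. Similarly, for $b=\psi(y)\in\Gamma_l\setminus\{1\}$ with $y\in\tilde\Gamma$ and $n=n(y)$, the following are equivalent: $l\nmid n$; $\ell(b^2)=2\ell(b)$; $\left(\frac{-n}{l}\right)=1$.
   Context: Let $p,l$ be distinct odd primes. Let $\mathbb H(\mathbb Z)$ be the ring of quaternions $x=x_0+x_1i+x_2j+x_3k$ with $x_0,\dots,x_3\in\mathbb Z$, where $i^2=j^2=k^2=-1$, $ij=-ji=k$; write $|x|^2=x_0^2+x_1^2+x_2^2+x_3^2$. Fix $c_p,d_p\in\mathbb Q_p$ with $c_p^2+d_p^2+1=0$ and $c_l,d_l\in\mathbb Q_l$ with $c_l^2+d_l^2+1=0$. Define $\psi:\mathbb H(\mathbb Z)\setminus\{0\}\to G:=PGL_2(\mathbb Q_p)\times PGL_2(\mathbb Q_l)$ by sending $x$ to the class of the pair $\left(\begin{pmatrix} x_0+x_1c_p+x_3d_p & -x_1d_p+x_2+x_3c_p\\ -x_1d_p-x_2+x_3c_p & x_0-x_1c_p-x_3d_p\end{pmatrix},\begin{pmatrix} x_0+x_1c_l+x_3d_l & -x_1d_l+x_2+x_3c_l\\ -x_1d_l-x_2+x_3c_l & x_0-x_1c_l-x_3d_l\end{pmatrix}\right)$.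 Let $\tilde\Gamma$ be the set of $x\in\mathbb H(\mathbb Z)$ such that $|x|^2=p^rl^s$ for some integers $r,s\ge 0$, and such that $x_0$ is odd and $x_1,x_2,x_3$ are even if $|x|^2\equiv 1\pmod 4$, while $x_1$ is even and $x_0,x_2,x_3$ are odd if $|x|^2\equiv 3\pmod 4$. Then $\Gamma=\psi(\tilde\Gamma)$ is a torsion-free lattice in $G$. Let $\tilde A=\{x\in\tilde\Gamma: x_0>0,\ |x|^2=p\}$, $\tilde B=\{y\in\tilde\Gamma: y_0>0,\ |y|^2=l\}$; $\Gamma_p=\langle\psi(\tilde A)\rangle$ and $\Gamma_l=\langle\psi(\tilde B)\rangle$ are free, and $\psi(\tilde A)\cup\psi(\tilde B)$ generates $\Gamma$. For $\gamma\in\Gamma$, $\ell(\gamma)$ is the word length of $\gamma$ with respect to the generating set $\psi(\tilde A)\cup\psi(\tilde B)$. Any $x\in\tilde\Gamma$ with $\psi(x)\ne 1$ can be written $x=x_0+z_0(c_1i+c_2j+c_3k)$ with $z_0\in\mathbb Z\setminus\{0\}$ and $c_1,c_2,c_3\in\mathbb Z$ relatively prime; set $n(x)=c_1^2+c_2^2+c_3^2$. For a prime $q$, $\left(\frac{m}{q}\right)$ is the Legendre symbol (equal to $0$ if $q\mid m$). *)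

theory Defs
  imports "HOL-Analysis.Analysis" "HOL-Number_Theory.Number_Theory"
begin

text \<open>Integer quaternions x = x0 + x1 i + x2 j + x3 k, represented by (x0,x1,x2,x3).\<close>
type_synonym quat = "int \<times> int \<times> int \<times> int"

definition qnorm :: "quat \<Rightarrow> int" where
  "qnorm x = (case x of (x0,x1,x2,x3) \<Rightarrow> x0^2 + x1^2 + x2^2 + x3^2)"

definition qre :: "quat \<Rightarrow> int" where
  "qre x = (case x of (x0,x1,x2,x3) \<Rightarrow> x0)"

definition in_Gamma_tilde :: "nat \<Rightarrow> nat \<Rightarrow> quat \<Rightarrow> bool" where
  "in_Gamma_tilde p l x \<longleftrightarrow>
     (case x of (x0,x1,x2,x3) \<Rightarrow>
        (\<exists>r s. qnorm x = int (p ^ r * l ^ s)) \<and>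
        (qnorm x mod 4 = 1 \<longrightarrow> odd x0 \<and> even x1 \<and> even x2 \<and> even x3) \<and>
        (qnorm x mod 4 = 3 \<longrightarrow> even x1 \<and> odd x0 \<and> odd x2 \<and> odd x3))"

definition A_tilde :: "nat \<Rightarrow> nat \<Rightarrow> quat set" where
  "A_tilde p l = {x. in_Gamma_tilde p l x \<and> qre x > 0 \<and> qnorm x = int p}"

definition B_tilde :: "nat \<Rightarrow> nat \<Rightarrow> quat set" where
  "B_tilde p l = {y. in_Gamma_tilde p l y \<and> qre y > 0 \<and> qnorm y = int l}"

definition nval :: "quat \<Rightarrow> int" where
  "nval x = (case x of (x0,x1,x2,x3) \<Rightarrow>
     (THE m. \<exists>z0 c1 c2 c3. z0 \<noteq> 0 \<and> gcd (gcd c1 c2) c3 = 1 \<and>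
        x1 = z0 * c1 \<and> x2 = z0 * c2 \<and> x3 = z0 * c3 \<and> m = c1^2 + c2^2 + c3^2))"

text \<open>The matrix component of psi over a field containing c,d with c^2+d^2+1=0.\<close>
definition psi_mat :: "'a::field \<Rightarrow> 'a \<Rightarrow> quat \<Rightarrow> 'a^2^2" where
  "psi_mat c d x = (case x of (x0,x1,x2,x3) \<Rightarrow>
     vector [vector [of_int x0 + of_int x1 * c + of_int x3 * d,
                     - of_int x1 * d + of_int x2 + of_int x3 * c],
             vector [- of_int x1 * d - of_int x2 + of_int x3 * c,
                     of_int x0 - of_int x1 * c - of_int x3 * d]])"

text \<open>Representatives of elements of G = PGL2(K1) x PGL2(K2): pairs of matrices.\<close>
definition psi :: "'a::field \<Rightarrow> 'a \<Rightarrow> 'b::field \<Rightarrow> 'b \<Rightarrow> quat \<Rightarrow> ('a^2^2) \<times> ('b^2^2)" where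
  "psi cp dp cl dl x = (psi_mat cp dp x, psi_mat cl dl x)"

definition gmul :: "('a::field^2^2) \<times> ('b::field^2^2) \<Rightarrow> ('a^2^2) \<times> ('b^2^2) \<Rightarrow> ('a^2^2) \<times> ('b^2^2)" where
  "gmul g h = (fst g ** fst h, snd g ** snd h)"

definition ginv :: "('a::field^2^2) \<times> ('b::field^2^2) \<Rightarrow> ('a^2^2) \<times> ('b^2^2)" where
  "ginv g = (matrix_inv (fst g), matrix_inv (snd g))"

definition gone :: "('a::field^2^2) \<times> ('b::field^2^2)" where
  "gone = (mat 1, mat 1)"

definition pgl_eq :: "'a::field^2^2 \<Rightarrow> 'a^2^2 \<Rightarrow> bool" where
  "pgl_eq A B \<longleftrightarrow> (\<exists>c. c \<noteq> 0 \<and> A = (\<chi> i j. c * B $ i $ j))"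

definition G_eq :: "('a::field^2^2) \<times> ('b::field^2^2) \<Rightarrow> ('a^2^2) \<times> ('b^2^2) \<Rightarrow> bool" where
  "G_eq g h \<longleftrightarrow> pgl_eq (fst g) (fst h) \<and> pgl_eq (snd g) (snd h)"

definition word_prod :: "'a::field \<Rightarrow> 'a \<Rightarrow> 'b::field \<Rightarrow> 'b \<Rightarrow> (quat \<times> bool) list
    \<Rightarrow> ('a^2^2) \<times> ('b^2^2)" where
  "word_prod cp dp cl dl ws =
     foldr (\<lambda>(x, b) acc. gmul (if b then ginv (psi cp dp cl dl x) else psi cp dp cl dl x) acc)
       ws gone"

definition in_generated :: "'a::field \<Rightarrow> 'a \<Rightarrow> 'b::field \<Rightarrow> 'b \<Rightarrow> quat set
    \<Rightarrow> ('a^2^2) \<times> ('b^2^2) \<Rightarrow> bool" where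
  "in_generated cp dp cl dl S g \<longleftrightarrow>
     (\<exists>ws. set (map fst ws) \<subseteq> S \<and> G_eq (word_prod cp dp cl dl ws) g)"

definition word_length :: "'a::field \<Rightarrow> 'a \<Rightarrow> 'b::field \<Rightarrow> 'b \<Rightarrow> quat set
    \<Rightarrow> ('a^2^2) \<times> ('b^2^2) \<Rightarrow> nat" where
  "word_length cp dp cl dl S g =
     (LEAST k. \<exists>ws. length ws = k \<and> set (map fst ws) \<subseteq> S \<and> G_eq (word_prod cp dp cl dl ws) g)"

end

theory Submission
  imports Defs
begin

definition qmul :: "quat \<Rightarrow> quat \<Rightarrow> quat" where
  "qmul x y = (case x of (a0,a1,a2,a3) \<Rightarrow> case y of (b0,b1,b2,b3) \<Rightarrow>
     (a0*b0 - a1*b1 - a2*b2 - a3*b3, a0*b1 + a1*b0 + a2*b3 - a3*b2,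
      a0*b2 - a1*b3 + a2*b0 + a3*b1, a0*b3 + a1*b2 - a2*b1 + a3*b0))"

definition qconj :: "quat \<Rightarrow> quat" where
  "qconj x = (case x of (a0,a1,a2,a3) \<Rightarrow> (a0,-a1,-a2,-a3))"

definition qsc :: "int \<Rightarrow> quat \<Rightarrow> quat" where
  "qsc k x = (case x of (a0,a1,a2,a3) \<Rightarrow> (k*a0,k*a1,k*a2,k*a3))"

definition qone :: quat where "qone = (1,0,0,0)"

definition qdvd :: "int \<Rightarrow> quat \<Rightarrow> bool" where
  "qdvd k x = (case x of (a0,a1,a2,a3) \<Rightarrow> k dvd a0 \<and> k dvd a1 \<and> k dvd a2 \<and> k dvd a3)"

lemma qmul_simp[simp]: "qmul (a0,a1,a2,a3) (b0,b1,b2,b3) =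
     (a0*b0 - a1*b1 - a2*b2 - a3*b3, a0*b1 + a1*b0 + a2*b3 - a3*b2,
      a0*b2 - a1*b3 + a2*b0 + a3*b1, a0*b3 + a1*b2 - a2*b1 + a3*b0)"
  by (simp add: qmul_def)
lemma qconj_simp[simp]: "qconj (a0,a1,a2,a3) = (a0,-a1,-a2,-a3)" by (simp add: qconj_def)
lemma qsc_simp[simp]: "qsc k (a0,a1,a2,a3) = (k*a0,k*a1,k*a2,k*a3)" by (simp add: qsc_def)
lemma qdvd_simp[simp]: "qdvd k (a0,a1,a2,a3) = (k dvd a0 \<and> k dvd a1 \<and> k dvd a2 \<and> k dvd a3)"
  by (simp add: qdvd_def)
lemma qnorm_simp[simp]: "qnorm (a0,a1,a2,a3) = a0^2+a1^2+a2^2+a3^2" by (simp add: qnorm_def)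
lemma qre_simp[simp]: "qre (a0,a1,a2,a3) = a0" by (simp add: qre_def)

lemma qmul_assoc: "qmul (qmul x y) z = qmul x (qmul y z)"
  by (cases x rule: prod_cases4; cases y rule: prod_cases4; cases z rule: prod_cases4)
     (simp add: algebra_simps)

lemma qmul_one_left[simp]: "qmul qone x = x"
  by (cases x rule: prod_cases4) (simp add: qone_def)
lemma qmul_one_right[simp]: "qmul x qone = x"
  by (cases x rule: prod_cases4) (simp add: qone_def)

lemma qnorm_mul: "qnorm (qmul x y) = qnorm x * qnorm y"
  by (cases x rule: prod_cases4; cases y rule: prod_cases4)
     (simp add: algebra_simps power2_eq_square)

lemma qnorm_conj[simp]: "qnorm (qconj x) = qnorm x"
  by (cases x rule: prod_cases4) simp

lemma qconj_conj[simp]: "qconj (qconj x) = x"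
  by (cases x rule: prod_cases4) simp

lemma qmul_conj_right: "qmul x (qconj x) = qsc (qnorm x) qone"
  by (cases x rule: prod_cases4) (simp add: qone_def algebra_simps power2_eq_square)
lemma qmul_conj_left: "qmul (qconj x) x = qsc (qnorm x) qone"
  by (cases x rule: prod_cases4) (simp add: qone_def algebra_simps power2_eq_square)

lemma qmul_sc_left: "qmul (qsc k x) y = qsc k (qmul x y)"
  by (cases x rule: prod_cases4; cases y rule: prod_cases4) (simp add: algebra_simps)
lemma qmul_sc_right: "qmul x (qsc k y) = qsc k (qmul x y)"
  by (cases x rule: prod_cases4; cases y rule: prod_cases4) (simp add: algebra_simps)
lemma qsc_sc: "qsc a (qsc b x) = qsc (a*b) x"
  by (cases x rule: prod_cases4) (simp add: algebra_simps)
lemma qsc_one[simp]: "qsc 1 x = x"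
  by (cases x rule: prod_cases4) simp
lemma qnorm_sc: "qnorm (qsc k x) = k^2 * qnorm x"
  by (cases x rule: prod_cases4) (simp add: algebra_simps power2_eq_square)
lemma qnorm_one[simp]: "qnorm qone = 1" by (simp add: qone_def)

lemma qnorm_eq0: "qnorm x = 0 \<longleftrightarrow> x = (0,0,0,0)"
  by (cases x rule: prod_cases4) (simp add: add_nonneg_eq_0_iff)

lemma qdvd_mul_left: "qdvd k x \<Longrightarrow> qdvd k (qmul x y)"
  by (cases x rule: prod_cases4; cases y rule: prod_cases4) auto
lemma qdvd_mul_right: "qdvd k y \<Longrightarrow> qdvd k (qmul x y)"
  by (cases x rule: prod_cases4; cases y rule: prod_cases4) auto
lemma qdvd_sc: "qdvd k (qsc k x)"
  by (cases x rule: prod_cases4) auto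

lemma qsandwich: "qmul u (qmul t u) =
   (case (qsc (2 * qre (qmul u t)) u, qsc (qnorm u) (qconj t)) of
     ((a0,a1,a2,a3),(b0,b1,b2,b3)) \<Rightarrow> (a0-b0,a1-b1,a2-b2,a3-b3))"
  by (cases u rule: prod_cases4; cases t rule: prod_cases4)
     (simp add: algebra_simps power2_eq_square)

definition smat :: "'a::field \<Rightarrow> 'a^2^2 \<Rightarrow> 'a^2^2" where
  "smat k A = (\<chi> i j. k * A $ i $ j)"

lemma smat_nth[simp]: "smat k A $ i $ j = k * A $ i $ j"
  by (simp add: smat_def)

lemma mat2_eq: "(A::'a^2^2) = B \<longleftrightarrow> A$1$1 = B$1$1 \<and> A$1$2 = B$1$2 \<and> A$2$1 = B$2$1 \<and> A$2$2 = B$2$2"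
  by (auto simp: vec_eq_iff forall_2)

lemma mmul2[simp]: "((A::'a::semiring_1^2^2) ** B) $ i $ j = A$i$1 * B$1$j + A$i$2 * B$2$j"
  by (simp add: matrix_matrix_mult_def sum_2)

lemma mat1_nth: "(mat 1 :: 'a::semiring_1^2^2) $1$1 = 1" "(mat 1 :: 'a::semiring_1^2^2) $1$2 = 0"
  "(mat 1 :: 'a::semiring_1^2^2) $2$1 = 0" "(mat 1 :: 'a::semiring_1^2^2) $2$2 = 1"
  by (simp_all add: mat_def)

lemma psi_nth: "psi_mat c d (a0,a1,a2,a3) $1$1 = of_int a0 + of_int a1 * c + of_int a3 * d"
  "psi_mat c d (a0,a1,a2,a3) $1$2 = - of_int a1 * d + of_int a2 + of_int a3 * c"
  "psi_mat c d (a0,a1,a2,a3) $2$1 = - of_int a1 * d - of_int a2 + of_int a3 * c"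
  "psi_mat c d (a0,a1,a2,a3) $2$2 = of_int a0 - of_int a1 * c - of_int a3 * d"
  by (simp_all add: psi_mat_def)

lemma psi_hom_aux:
  fixes c d x0 x1 x2 x3 y0 y1 y2 y3 :: "'a::field"
  assumes "c^2 + d^2 + 1 = 0"
  shows "(x0 + x1 * c + x3 * d) * (y0 + y1 * c + y3 * d) + (- x1 * d + x2 + x3 * c) * (- y1 * d - y2 + y3 * c)
     = (x0*y0 - x1*y1 - x2*y2 - x3*y3) + (x0*y1 + x1*y0 + x2*y3 - x3*y2) * c + (x0*y3 + x1*y2 - x2*y1 + x3*y0) * d"
    "(x0 + x1 * c + x3 * d) * (- y1 * d + y2 + y3 * c) + (- x1 * d + x2 + x3 * c) * (y0 - y1 * c - y3 * d)
     = - (x0*y1 + x1*y0 + x2*y3 - x3*y2) * d + (x0*y2 - x1*y3 + x2*y0 + x3*y1) + (x0*y3 + x1*y2 - x2*y1 + x3*y0) * c"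
    "(- x1 * d - x2 + x3 * c) * (y0 + y1 * c + y3 * d) + (x0 - x1 * c - x3 * d) * (- y1 * d - y2 + y3 * c)
     = - (x0*y1 + x1*y0 + x2*y3 - x3*y2) * d - (x0*y2 - x1*y3 + x2*y0 + x3*y1) + (x0*y3 + x1*y2 - x2*y1 + x3*y0) * c"
    "(- x1 * d - x2 + x3 * c) * (- y1 * d + y2 + y3 * c) + (x0 - x1 * c - x3 * d) * (y0 - y1 * c - y3 * d)
     = (x0*y0 - x1*y1 - x2*y2 - x3*y3) - (x0*y1 + x1*y0 + x2*y3 - x3*y2) * c - (x0*y3 + x1*y2 - x2*y1 + x3*y0) * d"
proof -
  have e1: "(x0 + x1 * c + x3 * d) * (y0 + y1 * c + y3 * d) + (- x1 * d + x2 + x3 * c) * (- y1 * d - y2 + y3 * c)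
     = (x0*y0 - x1*y1 - x2*y2 - x3*y3) + (x0*y1 + x1*y0 + x2*y3 - x3*y2) * c + (x0*y3 + x1*y2 - x2*y1 + x3*y0) * d
       + (x1*y1 + x3*y3) * (c^2 + d^2 + 1)"
    by (simp add: algebra_simps power2_eq_square)
  have e2: "(x0 + x1 * c + x3 * d) * (- y1 * d + y2 + y3 * c) + (- x1 * d + x2 + x3 * c) * (y0 - y1 * c - y3 * d)
     = - (x0*y1 + x1*y0 + x2*y3 - x3*y2) * d + (x0*y2 - x1*y3 + x2*y0 + x3*y1) + (x0*y3 + x1*y2 - x2*y1 + x3*y0) * c
       + (x1*y3 - x3*y1) * (c^2 + d^2 + 1)"
    by (simp add: algebra_simps power2_eq_square)
  have e3: "(- x1 * d - x2 + x3 * c) * (y0 + y1 * c + y3 * d) + (x0 - x1 * c - x3 * d) * (- y1 * d - y2 + y3 * c)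
     = - (x0*y1 + x1*y0 + x2*y3 - x3*y2) * d - (x0*y2 - x1*y3 + x2*y0 + x3*y1) + (x0*y3 + x1*y2 - x2*y1 + x3*y0) * c
       - (x1*y3 - x3*y1) * (c^2 + d^2 + 1)"
    by (simp add: algebra_simps power2_eq_square)
  have e4: "(- x1 * d - x2 + x3 * c) * (- y1 * d + y2 + y3 * c) + (x0 - x1 * c - x3 * d) * (y0 - y1 * c - y3 * d)
     = (x0*y0 - x1*y1 - x2*y2 - x3*y3) - (x0*y1 + x1*y0 + x2*y3 - x3*y2) * c - (x0*y3 + x1*y2 - x2*y1 + x3*y0) * d
       + (x1*y1 + x3*y3) * (c^2 + d^2 + 1)"
    by (simp add: algebra_simps power2_eq_square)
  show "(x0 + x1 * c + x3 * d) * (y0 + y1 * c + y3 * d) + (- x1 * d + x2 + x3 * c) * (- y1 * d - y2 + y3 * c)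
     = (x0*y0 - x1*y1 - x2*y2 - x3*y3) + (x0*y1 + x1*y0 + x2*y3 - x3*y2) * c + (x0*y3 + x1*y2 - x2*y1 + x3*y0) * d"
    using e1 assms by simp
  show "(x0 + x1 * c + x3 * d) * (- y1 * d + y2 + y3 * c) + (- x1 * d + x2 + x3 * c) * (y0 - y1 * c - y3 * d)
     = - (x0*y1 + x1*y0 + x2*y3 - x3*y2) * d + (x0*y2 - x1*y3 + x2*y0 + x3*y1) + (x0*y3 + x1*y2 - x2*y1 + x3*y0) * c"
    using e2 assms by simp
  show "(- x1 * d - x2 + x3 * c) * (y0 + y1 * c + y3 * d) + (x0 - x1 * c - x3 * d) * (- y1 * d - y2 + y3 * c)
     = - (x0*y1 + x1*y0 + x2*y3 - x3*y2) * d - (x0*y2 - x1*y3 + x2*y0 + x3*y1) + (x0*y3 + x1*y2 - x2*y1 + x3*y0) * c"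
    using e3 assms by simp
  show "(- x1 * d - x2 + x3 * c) * (- y1 * d + y2 + y3 * c) + (x0 - x1 * c - x3 * d) * (y0 - y1 * c - y3 * d)
     = (x0*y0 - x1*y1 - x2*y2 - x3*y3) - (x0*y1 + x1*y0 + x2*y3 - x3*y2) * c - (x0*y3 + x1*y2 - x2*y1 + x3*y0) * d"
    using e4 assms by simp
qed

lemma psi_hom:
  fixes c d :: "'a::field"
  assumes "c^2 + d^2 + 1 = 0"
  shows "psi_mat c d (qmul x y) = psi_mat c d x ** psi_mat c d y"
proof -
  obtain a0 a1 a2 a3 where x: "x = (a0,a1,a2,a3)" by (cases x rule: prod_cases4)
  obtain b0 b1 b2 b3 where y: "y = (b0,b1,b2,b3)" by (cases y rule: prod_cases4)
  show ?thesis unfolding x y mat2_eq mmul2 qmul_simp psi_nth of_int_add of_int_diff of_int_mult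
    using psi_hom_aux[OF assms] by simp
qed

lemma psi_sc: "psi_mat c d (qsc k x) = smat (of_int k) (psi_mat c d x)"
  by (cases x rule: prod_cases4) (simp add: mat2_eq psi_nth algebra_simps)

lemma psi_one: "psi_mat c d qone = mat 1"
  by (simp add: qone_def mat2_eq psi_nth mat1_nth)

lemma smat_mul_left: "smat k A ** B = smat k (A ** B)"
  by (simp add: mat2_eq algebra_simps)
lemma smat_mul_right: "A ** smat k B = smat k (A ** B)"
  by (simp add: mat2_eq algebra_simps)
lemma smat_smat: "smat a (smat b A) = smat (a*b) A"
  by (simp add: mat2_eq algebra_simps)
lemma smat_1: "smat 1 A = A"
  by (simp add: mat2_eq)

lemma matrix_inv_eq:
  fixes A B :: "'a::field^2^2"
  assumes "A ** B = mat 1" "B ** A = mat 1"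
  shows "matrix_inv A = B"
proof -
  have ex: "\<exists>A'. A ** A' = mat 1 \<and> A' ** A = mat 1" using assms by blast
  define C where "C = matrix_inv A"
  have C: "A ** C = mat 1 \<and> C ** A = mat 1"
    unfolding C_def matrix_inv_def by (rule someI_ex[OF ex])
  have "C = C ** (A ** B)" using assms by (simp add: matrix_mul_rid)
  also have "\<dots> = (C ** A) ** B" by (simp add: matrix_mul_assoc)
  also have "\<dots> = B" using C by (simp add: matrix_mul_lid)
  finally show ?thesis unfolding C_def .
qed

lemma psi_inv:
  fixes c d :: "'a::field_char_0"
  assumes "c^2 + d^2 + 1 = 0" "qnorm x \<noteq> 0"
  shows "matrix_inv (psi_mat c d x) = smat (1 / of_int (qnorm x)) (psi_mat c d (qconj x))"
proof (rule matrix_inv_eq)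
  have n: "(of_int (qnorm x) :: 'a) \<noteq> 0" using assms by simp
  show "psi_mat c d x ** smat (1 / of_int (qnorm x)) (psi_mat c d (qconj x)) = mat 1"
    using n by (simp add: smat_mul_right psi_hom[OF assms(1), symmetric] qmul_conj_right psi_sc psi_one
        smat_smat smat_1)
  show "smat (1 / of_int (qnorm x)) (psi_mat c d (qconj x)) ** psi_mat c d x = mat 1"
    using n by (simp add: smat_mul_left psi_hom[OF assms(1), symmetric] qmul_conj_left psi_sc psi_one
        smat_smat smat_1)
qed

lemma psi_scalar:
  fixes c d s :: "'a::field_char_0"
  assumes cd: "c^2 + d^2 + 1 = 0" and e: "psi_mat c d w = smat s (mat 1)"
  shows "w = (qre w, 0, 0, 0) \<and> of_int (qre w) = s"
proof -
  obtain w0 w1 w2 w3 where w: "w = (w0,w1,w2,w3)" by (cases w rule: prod_cases4)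
  from e have e1: "of_int w0 + of_int w1 * c + of_int w3 * d = s"
    and e2: "- of_int w1 * d + of_int w2 + of_int w3 * c = 0"
    and e3: "- of_int w1 * d - of_int w2 + of_int w3 * c = (0::'a)"
    and e4: "of_int w0 - of_int w1 * c - of_int w3 * d = s"
    unfolding w mat2_eq psi_nth by (simp_all add: mat1_nth)
  from e2 e3 have "2 * (of_int w2::'a) = 0" by (simp add: algebra_simps)
  hence w2: "w2 = 0" by simp
  have "(of_int w0 + of_int w1 * c + of_int w3 * d) - (of_int w0 - of_int w1 * c - of_int w3 * d) = s - s"
    using e1 e4 by simp
  hence "2 * (of_int w1 * c + of_int w3 * d) = (0::'a)" by (simp add: algebra_simps)
  hence f1: "of_int w1 * c + of_int w3 * d = (0::'a)" by (metis mult_eq_0_iff zero_neq_numeral)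
  from e2 w2 have f2: "of_int w3 * c - of_int w1 * d = (0::'a)" by (simp add: algebra_simps)
  have g1: "(of_int (w1^2 + w3^2)::'a) * c = 0"
  proof -
    have "(of_int (w1^2 + w3^2)::'a) * c = of_int w1 * (of_int w1 * c + of_int w3 * d) + of_int w3 * (of_int w3 * c - of_int w1 * d)"
      by (simp add: algebra_simps power2_eq_square)
    thus ?thesis using f1 f2 by simp
  qed
  have g2: "(of_int (w1^2 + w3^2)::'a) * d = 0"
  proof -
    have "(of_int (w1^2 + w3^2)::'a) * d = of_int w3 * (of_int w1 * c + of_int w3 * d) - of_int w1 * (of_int w3 * c - of_int w1 * d)"
      by (simp add: algebra_simps power2_eq_square)
    thus ?thesis using f1 f2 by simp
  qed
  have "w1^2 + w3^2 = 0"
  proof (rule ccontr)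
    assume "w1^2 + w3^2 \<noteq> 0"
    hence "(of_int (w1^2 + w3^2)::'a) \<noteq> 0" by (metis of_int_eq_0_iff)
    with g1 g2 have "c = 0" "d = 0" by simp_all
    with cd show False by simp
  qed
  hence w13: "w1 = 0" "w3 = 0" by (simp_all add: add_nonneg_eq_0_iff)
  show ?thesis using e1 w2 w13 w by simp
qed

definition lett :: "quat \<times> bool \<Rightarrow> quat" where
  "lett xb = (if snd xb then qconj (fst xb) else fst xb)"

definition Zw :: "(quat \<times> bool) list \<Rightarrow> quat" where
  "Zw ws = foldr (\<lambda>xb acc. qmul (lett xb) acc) ws qone"

definition fcomp :: "'a::field \<Rightarrow> 'a \<Rightarrow> (quat \<times> bool) list \<Rightarrow> 'a^2^2" where
  "fcomp c d ws = foldr (\<lambda>(x, b) acc. (if b then matrix_inv (psi_mat c d x) else psi_mat c d x) ** acc) ws (mat 1)"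

lemma Zw_Nil[simp]: "Zw [] = qone" by (simp add: Zw_def)
lemma Zw_Cons[simp]: "Zw (xb # ws) = qmul (lett xb) (Zw ws)" by (simp add: Zw_def)
lemma Zw_append: "Zw (ws @ vs) = qmul (Zw ws) (Zw vs)"
  by (induction ws) (simp_all add: qmul_assoc)

lemma word_prod_split: "word_prod cp dp cl dl ws = (fcomp cp dp ws, fcomp cl dl ws)"
  by (induction ws) (auto simp: word_prod_def fcomp_def gmul_def ginv_def psi_def gone_def)

lemma fcomp_Zw:
  fixes c d :: "'a::field_char_0"
  assumes cd: "c^2 + d^2 + 1 = 0" and nz: "\<forall>x\<in>fst ` set ws. qnorm x \<noteq> 0"
  shows "\<exists>k. k \<noteq> 0 \<and> fcomp c d ws = smat k (psi_mat c d (Zw ws))"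
  using nz
proof (induction ws)
  case Nil
  then show ?case by (intro exI[of _ 1]) (simp add: fcomp_def psi_one smat_1)
next
  case (Cons xb ws)
  obtain x b where xb: "xb = (x,b)" by (cases xb)
  from Cons obtain k where k: "k \<noteq> 0" "fcomp c d ws = smat k (psi_mat c d (Zw ws))" by auto
  have nx: "qnorm x \<noteq> 0" using Cons.prems xb by auto
  have f: "fcomp c d (xb # ws) = (if b then matrix_inv (psi_mat c d x) else psi_mat c d x) ** fcomp c d ws"
    by (simp add: fcomp_def xb)
  show ?case
  proof (cases b)
    case True
    have "fcomp c d (xb # ws) = smat (1 / of_int (qnorm x) * k) (psi_mat c d (Zw (xb # ws)))"
      unfolding f k(2) using True
      by (simp add: psi_inv[OF cd nx] smat_mul_left smat_mul_right smat_smat psi_hom[OF cd] lett_def xb)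
    thus ?thesis using k nx by (intro exI[of _ "1 / of_int (qnorm x) * k"]) simp
  next
    case False
    have "fcomp c d (xb # ws) = smat k (psi_mat c d (Zw (xb # ws)))"
      unfolding f k(2) using False
      by (simp add: smat_mul_right psi_hom[OF cd] lett_def xb)
    thus ?thesis using k by blast
  qed
qed

lemma pgl_eq_smat: "pgl_eq A B \<longleftrightarrow> (\<exists>k. k \<noteq> 0 \<and> A = smat k B)"
  by (simp add: pgl_eq_def smat_def)

lemma pgl_refl: "pgl_eq A A"
  unfolding pgl_eq_smat by (intro exI[of _ 1]) (simp add: smat_1)

lemma pgl_sym: "pgl_eq A B \<Longrightarrow> pgl_eq B A"
proof -
  assume "pgl_eq A B"
  then obtain k where k: "k \<noteq> 0" "A = smat k B" unfolding pgl_eq_smat by blast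
  have "smat (1/k) A = B" using k by (simp add: smat_smat smat_1)
  thus ?thesis using k unfolding pgl_eq_smat by (intro exI[of _ "1/k"]) auto
qed

lemma pgl_trans: "pgl_eq A B \<Longrightarrow> pgl_eq B C \<Longrightarrow> pgl_eq A C"
proof -
  assume "pgl_eq A B" "pgl_eq B C"
  then obtain k k' where k: "k \<noteq> 0" "A = smat k B" "k' \<noteq> 0" "B = smat k' C"
    unfolding pgl_eq_smat by blast
  thus ?thesis unfolding pgl_eq_smat by (intro exI[of _ "k*k'"]) (simp add: smat_smat)
qed

lemma pgl_smat_self: "k \<noteq> 0 \<Longrightarrow> pgl_eq (smat k A) A"
  unfolding pgl_eq_smat by blast

lemma pgl_smat_left: "k \<noteq> 0 \<Longrightarrow> pgl_eq (smat k A) B \<longleftrightarrow> pgl_eq A B"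
  using pgl_smat_self pgl_sym pgl_trans by metis

lemma pgl_smat_right: "k \<noteq> 0 \<Longrightarrow> pgl_eq A (smat k B) \<longleftrightarrow> pgl_eq A B"
  using pgl_smat_self pgl_sym pgl_trans by metis

lemma G_sym: "G_eq g h \<Longrightarrow> G_eq h g" by (simp add: G_eq_def pgl_sym)
lemma G_trans: "G_eq g h \<Longrightarrow> G_eq h k \<Longrightarrow> G_eq g k" by (meson G_eq_def pgl_trans)

definition qprop :: "quat \<Rightarrow> quat \<Rightarrow> bool" where
  "qprop u v \<longleftrightarrow> (\<exists>m n. m \<noteq> 0 \<and> n \<noteq> 0 \<and> qsc m u = qsc n v)"

lemma qprop_pgl:
  fixes c d :: "'a::field_char_0"
  assumes "qprop u v"
  shows "pgl_eq (psi_mat c d u) (psi_mat c d v)"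
proof -
  obtain m n where mn: "m \<noteq> 0" "n \<noteq> 0" "qsc m u = qsc n v" using assms qprop_def by blast
  have "smat (of_int m) (psi_mat c d u) = smat (of_int n) (psi_mat c d v)"
    using mn(3) by (metis psi_sc)
  hence "pgl_eq (smat (of_int m) (psi_mat c d u)) (smat (of_int n) (psi_mat c d v))"
    by (simp add: pgl_refl)
  thus ?thesis using mn by (simp add: pgl_smat_left pgl_smat_right)
qed

lemma pgl_qprop:
  fixes c d :: "'a::field_char_0"
  assumes cd: "c^2 + d^2 + 1 = 0" and pe: "pgl_eq (psi_mat c d u) (psi_mat c d v)"
    and u: "u \<noteq> (0,0,0,0)"
  shows "v \<noteq> (0,0,0,0) \<and> qprop u v"
proof -
  obtain k where k: "k \<noteq> 0" "psi_mat c d u = smat k (psi_mat c d v)" using pe pgl_eq_smat by blast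
  have v: "v \<noteq> (0,0,0,0)"
  proof
    assume v0: "v = (0,0,0,0)"
    have "psi_mat c d v = smat 0 (mat 1)" unfolding v0 by (simp add: mat2_eq psi_nth)
    hence "psi_mat c d u = smat 0 (mat 1)" using k by (simp add: mat2_eq)
    from psi_scalar[OF cd this] have "u = (0,0,0,0)" by (cases u rule: prod_cases4) simp
    with u show False by simp
  qed
  hence nv: "qnorm v \<noteq> 0" by (simp add: qnorm_eq0)
  define w where "w = qmul u (qconj v)"
  have "psi_mat c d w = smat (k * of_int (qnorm v)) (mat 1)"
    unfolding w_def psi_hom[OF cd] k(2) smat_mul_left psi_hom[OF cd, symmetric] qmul_conj_right psi_sc psi_one
    by (simp add: smat_smat)
  from psi_scalar[OF cd this] have w0: "w = (qre w, 0,0,0)" "of_int (qre w) = k * of_int (qnorm v)" by auto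
  have "qre w \<noteq> 0" using w0(2) k nv by auto
  moreover have "qsc (qnorm v) u = qsc (qre w) v"
  proof -
    have "qmul w v = qsc (qnorm v) u"
      unfolding w_def qmul_assoc qmul_conj_left qmul_sc_right by simp
    moreover have "qmul w v = qsc (qre w) v"
      by (subst w0(1), cases v rule: prod_cases4) simp
    ultimately show ?thesis by simp
  qed
  ultimately show ?thesis using v nv unfolding qprop_def by blast
qed

definition qsub :: "quat \<Rightarrow> quat \<Rightarrow> quat" where
  "qsub x y = (case x of (a0,a1,a2,a3) \<Rightarrow> case y of (b0,b1,b2,b3) \<Rightarrow> (a0-b0,a1-b1,a2-b2,a3-b3))"

lemma qsub_simp[simp]: "qsub (a0,a1,a2,a3) (b0,b1,b2,b3) = (a0-b0,a1-b1,a2-b2,a3-b3)"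
  by (simp add: qsub_def)

lemma qsandwich': "qmul u (qmul t u) = qsub (qsc (2 * qre (qmul u t)) u) (qsc (qnorm u) (qconj t))"
  by (cases u rule: prod_cases4; cases t rule: prod_cases4)
     (simp add: algebra_simps power2_eq_square)

lemma qmul_sub_right: "qmul z (qsub x y) = qsub (qmul z x) (qmul z y)"
  by (cases x rule: prod_cases4; cases y rule: prod_cases4; cases z rule: prod_cases4)
     (simp add: algebra_simps)

lemma qdvd_sub_cancel:
  fixes q :: int
  assumes "prime q" "q dvd N" "\<not> q dvd T" "qdvd q (qsub (qsc T A) (qsc N B))"
  shows "qdvd q A"
proof -
  obtain a0 a1 a2 a3 where A: "A = (a0,a1,a2,a3)" by (cases A rule: prod_cases4)
  obtain b0 b1 b2 b3 where B: "B = (b0,b1,b2,b3)" by (cases B rule: prod_cases4)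
  have h: "q dvd T * a" if "q dvd T * a - N * b" for a b
  proof -
    have "q dvd N * b" using assms(2) by simp
    hence "q dvd (T * a - N * b) + N * b" using that by (rule dvd_add[rotated])
    thus ?thesis by simp
  qed
  have g: "q dvd a" if "q dvd T * a - N * b" for a b
    using h[OF that] assms(1,3) prime_dvd_mult_iff by blast
  show ?thesis using assms(4) unfolding A B by (auto intro: g)
qed

lemma exists_trace_unit:
  fixes q :: int
  assumes "prime q" "odd q" "\<not> qdvd q a"
  shows "\<exists>e. \<not> q dvd (2 * qre (qmul a e))"
proof -
  obtain a0 a1 a2 a3 where A: "a = (a0,a1,a2,a3)" by (cases a rule: prod_cases4)
  have nd2: "q dvd 2 * x \<longleftrightarrow> q dvd x" for x
  proof -
    have "\<not> q dvd 2"
    proof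
      assume "q dvd 2"
      hence "q \<le> 2" by (simp add: zdvd_imp_le)
      moreover have "q \<ge> 2" using assms(1) prime_ge_2_int by blast
      ultimately have "q = 2" by simp
      with assms(2) show False by simp
    qed
    thus ?thesis using assms(1) prime_dvd_mult_iff by blast
  qed
  show ?thesis
  proof (cases "q dvd a0")
    case False
    thus ?thesis by (intro exI[of _ "(1,0,0,0)"]) (simp add: A nd2)
  next
    case T0: True
    show ?thesis
    proof (cases "q dvd a1")
      case False
      thus ?thesis by (intro exI[of _ "(0,1,0,0)"]) (simp add: A nd2)
    next
      case T1: True
      show ?thesis
      proof (cases "q dvd a2")
        case False
        thus ?thesis by (intro exI[of _ "(0,0,1,0)"]) (simp add: A nd2)
      next
        case T2: True
        hence "\<not> q dvd a3" using T0 T1 assms(3) A by simp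
        thus ?thesis by (intro exI[of _ "(0,0,0,1)"]) (simp add: A nd2)
      qed
    qed
  qed
qed

lemma key_cancel:
  fixes q :: int
  assumes "prime q" "odd q" "q dvd qnorm u" "qdvd q (qmul (qmul z u) w)"
  shows "qdvd q (qmul z u) \<or> qdvd q (qmul u w)"
proof (rule disjCI)
  assume nd: "\<not> qdvd q (qmul u w)"
  obtain e where e: "\<not> q dvd (2 * qre (qmul (qmul u w) e))"
    using exists_trace_unit[OF assms(1,2) nd] by blast
  define t where "t = qmul w e"
  have "qmul (qmul (qmul z u) w) (qmul e u) = qmul z (qmul u (qmul t u))"
    unfolding t_def by (simp add: qmul_assoc)
  also have "\<dots> = qsub (qsc (2 * qre (qmul u t)) (qmul z u)) (qsc (qnorm u) (qmul z (qconj t)))"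
    unfolding qsandwich' qmul_sub_right qmul_sc_right ..
  finally have eq: "qmul (qmul (qmul z u) w) (qmul e u) = \<dots>" .
  have "qdvd q (qmul (qmul (qmul z u) w) (qmul e u))" using assms(4) by (rule qdvd_mul_left)
  hence "qdvd q (qsub (qsc (2 * qre (qmul u t)) (qmul z u)) (qsc (qnorm u) (qmul z (qconj t))))"
    using eq by simp
  moreover have "qmul u t = qmul (qmul u w) e" unfolding t_def by (simp add: qmul_assoc)
  ultimately show "qdvd q (qmul z u)"
    using qdvd_sub_cancel[OF assms(1,3)] e by auto
qed

lemma qdvd_norm:
  fixes q :: int
  assumes "qdvd q x" shows "q^2 dvd qnorm x"
  using assms by (cases x rule: prod_cases4) (auto simp: power2_eq_square intro!: dvd_add mult_dvd_mono)

lemma not_qdvd_prime_norm: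
  fixes q :: int
  assumes "prime q" "qnorm x = q" shows "\<not> qdvd q x"
proof
  assume "qdvd q x"
  hence "q^2 dvd q" using qdvd_norm assms by metis
  hence "q * q dvd q * 1" by (simp add: power2_eq_square)
  moreover have "q \<noteq> 0" using assms(1) by auto
  ultimately have "q dvd 1" by simp
  with prime_ge_2_int[OF assms(1)] show False by auto
qed

definition qprod :: "quat list \<Rightarrow> quat" where
  "qprod ys = foldr qmul ys qone"

lemma qprod_append: "qprod (xs @ ys) = qmul (qprod xs) (qprod ys)"
  unfolding qprod_def by (induction xs) (simp_all add: qmul_assoc)

lemma qprod_single[simp]: "qprod [y] = y" by (simp add: qprod_def)
lemma qprod_Nil[simp]: "qprod [] = qone" by (simp add: qprod_def)
lemma qprod_Cons[simp]: "qprod (y # ys) = qmul y (qprod ys)" by (simp add: qprod_def)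

lemma adjacent_pair:
  fixes q :: int
  assumes "prime q" "odd q" "\<forall>y\<in>set ys. qnorm y = q" "qdvd q (qprod ys)"
  shows "\<exists>i. Suc i < length ys \<and> qdvd q (qmul (ys!i) (ys!Suc i))"
  using assms(3,4)
proof (induction ys rule: rev_induct)
  case Nil
  then show ?case using assms(1) prime_ge_2_int[of q] by (auto simp: qprod_def qone_def)
next
  case (snoc w ys0)
  show ?case
  proof (cases "qdvd q (qprod ys0)")
    case True
    with snoc obtain i where i: "Suc i < length ys0" "qdvd q (qmul (ys0!i) (ys0!Suc i))" by auto
    thus ?thesis by (intro exI[of _ i]) (simp add: nth_append)
  next
    case False
    show ?thesis
    proof (cases ys0 rule: rev_cases)
      case Nil
      hence "qdvd q w" using snoc.prems by simp
      moreover have "qnorm w = q" using snoc.prems by simp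
      ultimately show ?thesis using not_qdvd_prime_norm[OF assms(1)] by blast
    next
      case (snoc zs u)
      have pu: "qprod ys0 = qmul (qprod zs) u" using snoc by (simp add: qprod_append)
      have "qdvd q (qmul (qmul (qprod zs) u) w)"
        using snoc.prems(2) \<open>ys0 = zs @ [u]\<close> by (simp add: qprod_append qmul_assoc)
      moreover have "q dvd qnorm u" using snoc.prems(1) \<open>ys0 = zs @ [u]\<close> by simp
      ultimately have "qdvd q (qmul (qprod zs) u) \<or> qdvd q (qmul u w)"
        using key_cancel[OF assms(1,2)] by blast
      hence "qdvd q (qmul u w)" using False pu by simp
      thus ?thesis using \<open>ys0 = zs @ [u]\<close>
        by (intro exI[of _ "length zs"]) (simp add: nth_append)
    qed
  qed
qed

definition gens :: "nat \<Rightarrow> nat \<Rightarrow> nat \<Rightarrow> quat set" where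
  "gens p l q = {x. in_Gamma_tilde p l x \<and> qre x > 0 \<and> qnorm x = int q}"

lemma conj_Gamma: "in_Gamma_tilde p l (qconj x) = in_Gamma_tilde p l x"
proof (cases x rule: prod_cases4)
  case (fields a b c d)
  have N: "qnorm (a,-b,-c,-d) = qnorm (a,b,c,d)" by simp
  show ?thesis unfolding fields qconj_simp in_Gamma_tilde_def N prod.case even_minus ..
qed

lemma conj_gens: "x \<in> gens p l q \<Longrightarrow> qconj x \<in> gens p l q"
  unfolding gens_def using conj_Gamma[of p l x]
  by (cases x rule: prod_cases4) simp

lemma lett_gens: "fst xb \<in> gens p l q \<Longrightarrow> lett xb \<in> gens p l q"
  by (simp add: lett_def conj_gens)

lemma gens_parity:
  assumes "(a0,a1,a2,a3) \<in> gens p l q" "odd q"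
  shows "(odd a0 \<and> even a1 \<and> even a2 \<and> even a3) \<or> (even a1 \<and> odd a0 \<and> odd a2 \<and> odd a3)"
proof -
  have "int q mod 4 = 1 \<or> int q mod 4 = 3"
  proof -
    have "odd (int q)" using assms(2) by simp
    thus ?thesis by presburger
  qed
  thus ?thesis using assms(1) unfolding gens_def in_Gamma_tilde_def by auto
qed

lemma qsc_cancel: "k \<noteq> 0 \<Longrightarrow> qsc k x = qsc k y \<longleftrightarrow> x = y"
  by (cases x rule: prod_cases4; cases y rule: prod_cases4) simp

lemma qdvd_ex: "qdvd k x \<Longrightarrow> \<exists>e. x = qsc k e"
proof (cases x rule: prod_cases4)
  case (fields a0 a1 a2 a3)
  assume "qdvd k x"
  then obtain b0 b1 b2 b3 where "a0 = k*b0" "a1 = k*b1" "a2 = k*b2" "a3 = k*b3"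
    using fields by (auto elim!: dvdE)
  thus ?thesis using fields by (intro exI[of _ "(b0,b1,b2,b3)"]) simp
qed

lemma sq_ge1: "(x::int) \<noteq> 0 \<Longrightarrow> x^2 \<ge> 1"
  by (metis abs_square_le_1 dual_order.eq_iff le_less not_less one_le_power power2_abs zero_less_abs_iff
       int_one_le_iff_zero_less)

lemma sq_eq1: "(x::int)^2 = 1 \<longleftrightarrow> x = 1 \<or> x = -1"
  using power2_eq_1_iff by blast

lemma unit_quat:
  assumes "qnorm e = 1"
  shows "e \<in> {(1,0,0,0),(-1,0,0,0),(0,1,0,0),(0,-1,0,0),(0,0,1,0),(0,0,-1,0),(0,0,0,1),(0,0,0,-1)}"
proof (cases e rule: prod_cases4)
  case (fields a b c d)
  have n: "a^2+b^2+c^2+d^2 = 1" using assms fields by simp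
  have z: "x^2 + y^2 + z^2 = 0 \<Longrightarrow> x = 0 \<and> y = 0 \<and> z = 0" for x y z :: int
    by (metis add_nonneg_eq_0_iff power_eq_0_iff sum_power2_ge_zero zero_le_power2)
  show ?thesis
  proof (cases "a \<noteq> 0")
    case True
    from sq_ge1[OF True] n have "b^2+c^2+d^2 = 0" "a^2 = 1"
      by (smt (verit) zero_le_power2)+
    thus ?thesis using z[of b c d] sq_eq1[of a] fields by auto
  next
    case a0: False
    show ?thesis
    proof (cases "b \<noteq> 0")
      case True
      from sq_ge1[OF True] n a0 have "a^2+c^2+d^2 = 0" "b^2 = 1"
        by (smt (verit) zero_le_power2)+
      thus ?thesis using z[of a c d] sq_eq1[of b] fields by auto
    next
      case b0: False
      show ?thesis
      proof (cases "c \<noteq> 0")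
        case True
        from sq_ge1[OF True] n a0 b0 have "a^2+b^2+d^2 = 0" "c^2 = 1"
          by (smt (verit) zero_le_power2)+
        thus ?thesis using z[of a b d] sq_eq1[of c] fields by auto
      next
        case c0: False
        from n a0 b0 c0 have "d^2 = 1" by simp
        thus ?thesis using sq_eq1[of d] fields a0 b0 c0 by auto
      qed
    qed
  qed
qed

lemma gens_par1:
  assumes "(a0,a1,a2,a3) \<in> gens p l q" "int q mod 4 = 1"
  shows "odd a0 \<and> even a1 \<and> even a2 \<and> even a3"
proof -
  have g: "in_Gamma_tilde p l (a0,a1,a2,a3)" and n: "qnorm (a0,a1,a2,a3) = int q"
    using assms(1) unfolding gens_def by (simp_all del: qnorm_simp)
  have "qnorm (a0,a1,a2,a3) mod 4 = 1" using n assms(2) by (simp del: qnorm_simp)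
  thus ?thesis using g unfolding in_Gamma_tilde_def prod.case by blast
qed

lemma gens_par3:
  assumes "(a0,a1,a2,a3) \<in> gens p l q" "int q mod 4 = 3"
  shows "even a1 \<and> odd a0 \<and> odd a2 \<and> odd a3"
proof -
  have g: "in_Gamma_tilde p l (a0,a1,a2,a3)" and n: "qnorm (a0,a1,a2,a3) = int q"
    using assms(1) unfolding gens_def by (simp_all del: qnorm_simp)
  have "qnorm (a0,a1,a2,a3) mod 4 = 3" using n assms(2) by (simp del: qnorm_simp)
  thus ?thesis using g unfolding in_Gamma_tilde_def prod.case by blast
qed

lemma unit_parity:
  assumes "a \<in> gens p l q" "b \<in> gens p l q" "odd q" "b = qmul a e" "qnorm e = 1"
  shows "e = qone"
proof (rule ccontr)
  assume ne: "e \<noteq> qone"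
  obtain a0 a1 a2 a3 where A: "a = (a0,a1,a2,a3)" by (cases a rule: prod_cases4)
  obtain b0 b1 b2 b3 where B: "b = (b0,b1,b2,b3)" by (cases b rule: prod_cases4)
  have ra: "a0 > 0" using assms(1) A unfolding gens_def by (simp del: qnorm_simp)
  have rb: "b0 > 0" using assms(2) B unfolding gens_def by (simp del: qnorm_simp)
  have q4: "int q mod 4 = 1 \<or> int q mod 4 = 3"
  proof -
    have "odd (int q)" using assms(3) by simp
    thus ?thesis by presburger
  qed
  have e: "e \<in> {(1,0,0,0),(-1,0,0,0),(0,1,0,0),(0,-1,0,0),(0,0,1,0),(0,0,-1,0),(0,0,0,1),(0,0,0,-1)}"
    by (rule unit_quat[OF assms(5)])
  from e ne have "e = (-1,0,0,0) \<or> e = (0,1,0,0) \<or> e = (0,-1,0,0) \<or> e = (0,0,1,0) \<or>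
       e = (0,0,-1,0) \<or> e = (0,0,0,1) \<or> e = (0,0,0,-1)" by (simp add: qone_def)
  then show False
  proof (elim disjE)
    assume "e = (-1,0,0,0)"
    hence "b0 = - a0" using assms(4) A B by simp
    thus False using ra rb by simp
  next
    assume "e = (0,1,0,0)"
    hence "b1 = a0" using assms(4) A B by simp
    thus False using q4 gens_par1[of a0 a1 a2 a3] gens_par1[of b0 b1 b2 b3] gens_par3[of a0 a1 a2 a3]
      gens_par3[of b0 b1 b2 b3] assms(1,2) A B by auto
  next
    assume "e = (0,-1,0,0)"
    hence "b1 = - a0" using assms(4) A B by simp
    thus False using q4 gens_par1[of a0 a1 a2 a3] gens_par1[of b0 b1 b2 b3] gens_par3[of a0 a1 a2 a3]
      gens_par3[of b0 b1 b2 b3] assms(1,2) A B by auto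
  next
    assume "e = (0,0,1,0)"
    hence "b0 = - a2" "b1 = - a3" using assms(4) A B by simp_all
    thus False using q4 gens_par1[of a0 a1 a2 a3] gens_par1[of b0 b1 b2 b3] gens_par3[of a0 a1 a2 a3]
      gens_par3[of b0 b1 b2 b3] assms(1,2) A B by auto
  next
    assume "e = (0,0,-1,0)"
    hence "b0 = a2" "b1 = a3" using assms(4) A B by simp_all
    thus False using q4 gens_par1[of a0 a1 a2 a3] gens_par1[of b0 b1 b2 b3] gens_par3[of a0 a1 a2 a3]
      gens_par3[of b0 b1 b2 b3] assms(1,2) A B by auto
  next
    assume "e = (0,0,0,1)"
    hence "b0 = - a3" "b1 = a2" using assms(4) A B by simp_all
    thus False using q4 gens_par1[of a0 a1 a2 a3] gens_par1[of b0 b1 b2 b3] gens_par3[of a0 a1 a2 a3]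
      gens_par3[of b0 b1 b2 b3] assms(1,2) A B by auto
  next
    assume "e = (0,0,0,-1)"
    hence "b0 = a3" "b1 = - a2" using assms(4) A B by simp_all
    thus False using q4 gens_par1[of a0 a1 a2 a3] gens_par1[of b0 b1 b2 b3] gens_par3[of a0 a1 a2 a3]
      gens_par3[of b0 b1 b2 b3] assms(1,2) A B by auto
  qed
qed

lemma pair_conj:
  assumes "prime q" "odd q" "a \<in> gens p l q" "b \<in> gens p l q" "qdvd (int q) (qmul a b)"
  shows "b = qconj a"
proof -
  obtain e where e: "qmul a b = qsc (int q) e" using qdvd_ex assms(5) by blast
  have qn: "qnorm a = int q" "qnorm b = int q" using assms(3,4) by (simp_all add: gens_def)
  have q0: "int q \<noteq> 0" using assms(1) by auto
  have "qsc (int q) b = qmul (qmul (qconj a) a) b"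
    by (simp add: qmul_conj_left qmul_sc_left qn)
  also have "\<dots> = qsc (int q) (qmul (qconj a) e)" by (simp add: qmul_assoc e qmul_sc_right)
  finally have b: "b = qmul (qconj a) e" using qsc_cancel[OF q0] by blast
  have "int q = int q * qnorm e" using qnorm_mul[of "qconj a" e] b qn by simp
  hence ne: "qnorm e = 1" using q0 by simp
  have "e = qone" using unit_parity[OF conj_gens[OF assms(3)] assms(4) assms(2) b ne] .
  thus ?thesis using b by simp
qed


lemma Zw_qprod: "Zw ws = qprod (map lett ws)"
  by (induction ws) simp_all

lemma list_split2:
  assumes "Suc i < length ws"
  shows "ws = take i ws @ [ws!i, ws!Suc i] @ drop (Suc (Suc i)) ws"
proof -
  have "drop i ws = ws!i # drop (Suc i) ws" using assms by (simp add: Cons_nth_drop_Suc)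
  moreover have "drop (Suc i) ws = ws!Suc i # drop (Suc (Suc i)) ws" using assms by (simp add: Cons_nth_drop_Suc)
  ultimately show ?thesis by (metis append_Cons append_Nil append_take_drop_id)
qed

lemma Zw_norm:
  assumes "\<forall>x\<in>set (map fst ws). qnorm x = int q \<or> qnorm x = int q'"
  shows "\<exists>a b. qnorm (Zw ws) = int q ^ a * int q' ^ b \<and> a + b = length ws"
  using assms
proof (induction ws)
  case Nil
  then show ?case by simp
next
  case (Cons xb ws)
  then obtain a b where ab: "qnorm (Zw ws) = int q ^ a * int q' ^ b" "a + b = length ws" by auto
  have nl: "qnorm (lett xb) = qnorm (fst xb)" by (simp add: lett_def)
  from Cons.prems have "qnorm (fst xb) = int q \<or> qnorm (fst xb) = int q'" by simp
  thus ?case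
  proof
    assume h: "qnorm (fst xb) = int q"
    show ?case using ab by (intro exI[of _ "Suc a"] exI[of _ b]) (simp add: qnorm_mul nl h)
  next
    assume h: "qnorm (fst xb) = int q'"
    show ?case using ab by (intro exI[of _ a] exI[of _ "Suc b"]) (simp add: qnorm_mul nl h)
  qed
qed

lemma reduce:
  assumes "prime q" "odd q"
  shows "set (map fst ws) \<subseteq> gens p l q \<Longrightarrow> \<exists>ws' m. set (map fst ws') \<subseteq> gens p l q \<and>
     Zw ws = qsc (int q ^ m) (Zw ws') \<and> \<not> qdvd (int q) (Zw ws') \<and> length ws = length ws' + 2*m"
proof (induction "length ws" arbitrary: ws rule: less_induct)
  case less
  show ?case
  proof (cases "qdvd (int q) (Zw ws)")
    case False
    thus ?thesis using less.prems by (intro exI[of _ ws] exI[of _ 0]) simp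
  next
    case True
    have pq: "prime (int q)" "odd (int q)" using assms by simp_all
    have lg: "lett xb \<in> gens p l q" if "xb \<in> set ws" for xb
    proof -
      have "fst xb \<in> gens p l q" using less.prems that by auto
      thus ?thesis by (rule lett_gens)
    qed
    have "\<forall>y\<in>set (map lett ws). qnorm y = int q" using lg by (auto simp: gens_def)
    from adjacent_pair[OF pq this] True obtain i where
      i: "Suc i < length ws" "qdvd (int q) (qmul (lett (ws!i)) (lett (ws!Suc i)))"
      by (auto simp: Zw_qprod)
    have g1: "lett (ws!i) \<in> gens p l q" "lett (ws!Suc i) \<in> gens p l q" using i(1) lg by auto
    have cj: "lett (ws!Suc i) = qconj (lett (ws!i))"
      using pair_conj[OF assms g1 i(2)] .
    have nq: "qnorm (lett (ws!i)) = int q" using g1 by (simp add: gens_def)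
    define ws0 where "ws0 = take i ws @ drop (Suc (Suc i)) ws"
    have "Zw ws = Zw (take i ws @ [ws!i, ws!Suc i] @ drop (Suc (Suc i)) ws)"
      using list_split2[OF i(1)] by simp
    also have "\<dots> = qmul (Zw (take i ws)) (qmul (qmul (lett (ws!i)) (lett (ws!Suc i))) (Zw (drop (Suc (Suc i)) ws)))"
      by (simp add: Zw_append qmul_assoc)
    also have "\<dots> = qsc (int q) (Zw ws0)"
      unfolding cj qmul_conj_right nq ws0_def Zw_append qmul_sc_left qmul_sc_right by simp
    finally have Z: "Zw ws = qsc (int q) (Zw ws0)" .
    have len: "length ws0 + 2 = length ws" using i(1) by (simp add: ws0_def)
    have sub: "set (map fst ws0) \<subseteq> gens p l q"
      using less.prems by (auto simp: ws0_def dest: in_set_takeD in_set_dropD)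
    from less.hyps[of ws0] len sub obtain ws' m where
      ih: "set (map fst ws') \<subseteq> gens p l q" "Zw ws0 = qsc (int q ^ m) (Zw ws')"
          "\<not> qdvd (int q) (Zw ws')" "length ws0 = length ws' + 2*m"
      by auto
    show ?thesis
      using ih Z len by (intro exI[of _ ws'] exI[of _ "Suc m"]) (auto simp: qsc_sc)
  qed
qed

lemma mult_le_coord:
  fixes q :: nat and m n y z :: int
  assumes "prime q" "m \<noteq> 0" "n \<noteq> 0" "m * z = n * y" "\<not> int q dvd z"
  shows "multiplicity (int q) n \<le> multiplicity (int q) m"
proof -
  have pq: "prime (int q)" using assms(1) by simp
  have "int q ^ multiplicity (int q) n dvd n" by (rule multiplicity_dvd)
  hence "int q ^ multiplicity (int q) n dvd m * z" using assms(4) by simp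
  moreover have "coprime (int q ^ multiplicity (int q) n) z"
    using prime_imp_coprime[OF pq assms(5)] by simp
  ultimately have dv: "int q ^ multiplicity (int q) n dvd m"
    using coprime_dvd_mult_left_iff by metis
  have nu: "\<not> is_unit (int q)" using pq not_prime_unit by blast
  show ?thesis by (rule multiplicity_geI[OF assms(2) nu dv])
qed

lemma lowerL:
  fixes q q' :: nat
  assumes "prime q" "prime q'" "q \<noteq> q'" "m \<noteq> 0" "n \<noteq> 0" "qsc m Z1 = qsc n Z2"
    "qnorm Z1 = int q ^ r" "\<not> qdvd (int q) Z1" "qnorm Z2 = int q ^ a * int q' ^ b"
  shows "r \<le> a"
proof -
  have pq: "prime (int q)" "prime (int q')" using assms(1,2) by simp_all
  have pe: "prime_elem (int q)" using pq by simp
  have "m^2 * int q ^ r = n^2 * (int q ^ a * int q' ^ b)"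
    using arg_cong[OF assms(6), of qnorm] assms(7,9) by (simp add: qnorm_sc)
  hence eq: "multiplicity (int q) (m^2 * int q ^ r) = multiplicity (int q) (n^2 * (int q ^ a * int q' ^ b))"
    by simp
  have q0: "int q \<noteq> 0" "int q' \<noteq> 0" using pq by auto
  have mo: "multiplicity (int q) (int q') = 0"
    using prime_multiplicity_other[OF pq] assms(3) by simp
  have l: "multiplicity (int q) (m^2 * int q ^ r) = 2 * multiplicity (int q) m + r"
  proof -
    have "multiplicity (int q) (m^2 * int q ^ r) = multiplicity (int q) (m^2) + multiplicity (int q) (int q ^ r)"
      by (rule prime_elem_multiplicity_mult_distrib[OF pe]) (use assms(4) q0 in auto)
    also have "multiplicity (int q) (m^2) = 2 * multiplicity (int q) m"
      by (rule prime_elem_multiplicity_power_distrib[OF pe assms(4)])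
    also have "multiplicity (int q) (int q ^ r) = r"
      by (rule multiplicity_prime_power[OF pe])
    finally show ?thesis .
  qed
  have rr: "multiplicity (int q) (n^2 * (int q ^ a * int q' ^ b)) = 2 * multiplicity (int q) n + a"
  proof -
    have "multiplicity (int q) (n^2 * (int q ^ a * int q' ^ b)) = multiplicity (int q) (n^2) + multiplicity (int q) (int q ^ a * int q' ^ b)"
      by (rule prime_elem_multiplicity_mult_distrib[OF pe]) (use assms(5) q0 in auto)
    also have "multiplicity (int q) (int q ^ a * int q' ^ b) = multiplicity (int q) (int q ^ a) + multiplicity (int q) (int q' ^ b)"
      by (rule prime_elem_multiplicity_mult_distrib[OF pe]) (use q0 in auto)
    also have "multiplicity (int q) (n^2) = 2 * multiplicity (int q) n"
      by (rule prime_elem_multiplicity_power_distrib[OF pe assms(5)])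
    also have "multiplicity (int q) (int q ^ a) = a"
      by (rule multiplicity_prime_power[OF pe])
    also have "multiplicity (int q) (int q' ^ b) = b * multiplicity (int q) (int q')"
      by (rule prime_elem_multiplicity_power_distrib[OF pe q0(2)])
    finally show ?thesis using mo by simp
  qed
  have mle: "multiplicity (int q) n \<le> multiplicity (int q) m"
  proof -
    obtain a0 a1 a2 a3 where Z1: "Z1 = (a0,a1,a2,a3)" by (cases Z1 rule: prod_cases4)
    obtain b0 b1 b2 b3 where Z2: "Z2 = (b0,b1,b2,b3)" by (cases Z2 rule: prod_cases4)
    have e: "m * a0 = n * b0" "m * a1 = n * b1" "m * a2 = n * b2" "m * a3 = n * b3"
      using assms(6) Z1 Z2 by simp_all
    have "\<not> int q dvd a0 \<or> \<not> int q dvd a1 \<or> \<not> int q dvd a2 \<or> \<not> int q dvd a3"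
      using assms(8) Z1 by simp
    thus ?thesis
    proof (elim disjE)
      assume "\<not> int q dvd a0" thus ?thesis by (rule mult_le_coord[OF assms(1,4,5) e(1)])
    next
      assume "\<not> int q dvd a1" thus ?thesis by (rule mult_le_coord[OF assms(1,4,5) e(2)])
    next
      assume "\<not> int q dvd a2" thus ?thesis by (rule mult_le_coord[OF assms(1,4,5) e(3)])
    next
      assume "\<not> int q dvd a3" thus ?thesis by (rule mult_le_coord[OF assms(1,4,5) e(4)])
    qed
  qed
  show ?thesis using eq l rr mle by linarith
qed

lemma gcd3_mult: "gcd (gcd (z*c1) (z*c2)) (z*c3) = \<bar>z\<bar> * gcd (gcd c1 c2) (c3::int)"
proof -
  have "gcd (z*c1) (z*c2) = \<bar>z * gcd c1 c2\<bar>" by (simp add: gcd_mult_left)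
  hence "gcd (gcd (z*c1) (z*c2)) (z*c3) = gcd (z * gcd c1 c2) (z*c3)" by simp
  also have "\<dots> = \<bar>z * gcd (gcd c1 c2) c3\<bar>" by (simp add: gcd_mult_left)
  finally show ?thesis by (simp add: abs_mult)
qed

lemma nval_explicit:
  assumes "(x1,x2,x3) \<noteq> (0,0,0)"
  shows "\<exists>c1 c2 c3. gcd (gcd c1 c2) c3 = 1 \<and> x1 = gcd (gcd x1 x2) x3 * c1 \<and>
     x2 = gcd (gcd x1 x2) x3 * c2 \<and> x3 = gcd (gcd x1 x2) x3 * c3 \<and>
     nval (x0,x1,x2,x3) = c1^2 + c2^2 + c3^2"
proof -
  define g where "g = gcd (gcd x1 x2) x3"
  have g0: "g \<noteq> 0" using assms by (auto simp: g_def)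
  have gp: "g > 0" using g0 gcd_ge_0_int[of "gcd x1 x2" x3] unfolding g_def by linarith
  have d1: "g dvd x1" unfolding g_def by (rule dvd_trans[OF gcd_dvd1 gcd_dvd1])
  have d2: "g dvd x2" unfolding g_def by (rule dvd_trans[OF gcd_dvd1 gcd_dvd2])
  have d3: "g dvd x3" unfolding g_def by (rule gcd_dvd2)
  obtain c1 where c1: "x1 = g * c1" using d1 by (rule dvdE)
  obtain c2 where c2: "x2 = g * c2" using d2 by (rule dvdE)
  obtain c3 where c3: "x3 = g * c3" using d3 by (rule dvdE)
  note c = c1 c2 c3
  have gc: "gcd (gcd c1 c2) c3 = 1"
  proof -
    have "g = gcd (gcd x1 x2) x3" by (fact g_def)
    also have "\<dots> = gcd (gcd (g*c1) (g*c2)) (g*c3)" by (simp only: c[symmetric])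
    also have "\<dots> = g * gcd (gcd c1 c2) c3" using gcd3_mult[of g c1 c2 c3] gp by simp
    finally have "g = g * gcd (gcd c1 c2) c3" .
    thus ?thesis using g0 by simp
  qed
  define P where "P = (\<lambda>m. \<exists>z0 c1 c2 c3. z0 \<noteq> 0 \<and> gcd (gcd c1 c2) c3 = 1 \<and>
        x1 = z0 * c1 \<and> x2 = z0 * c2 \<and> x3 = z0 * c3 \<and> m = c1^2 + c2^2 + c3^2)"
  have uniq: "m = c1^2 + c2^2 + c3^2" if "P m" for m
  proof -
    from that obtain z0 d1 d2 d3 where d: "z0 \<noteq> 0" "gcd (gcd d1 d2) d3 = 1"
      "x1 = z0 * d1" "x2 = z0 * d2" "x3 = z0 * d3" "m = d1^2 + d2^2 + d3^2" unfolding P_def by metis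
    have "g = \<bar>z0\<bar>" using gcd3_mult[of z0 d1 d2 d3] d by (simp add: g_def)
    hence gz: "g^2 = z0^2" by simp
    have "m * z0^2 = x1^2 + x2^2 + x3^2" using d by (simp add: algebra_simps power_mult_distrib)
    also have "\<dots> = (c1^2 + c2^2 + c3^2) * g^2" using c by (simp add: algebra_simps power_mult_distrib)
    finally have "m * g^2 = (c1^2 + c2^2 + c3^2) * g^2" using gz by simp
    thus ?thesis using g0 by simp
  qed
  have "P (c1^2 + c2^2 + c3^2)" unfolding P_def using g0 gc c
    by (intro exI[of _ g] exI[of _ c1] exI[of _ c2] exI[of _ c3]) simp
  hence "(THE m. P m) = c1^2 + c2^2 + c3^2" using uniq by (rule the_equality)
  hence "nval (x0,x1,x2,x3) = c1^2 + c2^2 + c3^2" unfolding nval_def P_def by simp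
  thus ?thesis using gc c unfolding g_def[symmetric] by (intro exI[of _ c1] exI[of _ c2] exI[of _ c3]) simp
qed


lemma nt_main:
  fixes q :: int
  assumes q: "prime q" "odd q" and Z: "Z = (z0, v1, v2, v3)" and v: "(v1,v2,v3) \<noteq> (0,0,0)"
    and N: "qnorm Z = q^r" and r: "r \<ge> 1" and nd: "\<not> qdvd q Z"
  shows "(qdvd q (qmul Z Z) \<longleftrightarrow> q dvd nval Z) \<and> (Legendre (- nval Z) q = 1 \<longleftrightarrow> \<not> q dvd nval Z)"
proof -
  define g where "g = gcd (gcd v1 v2) v3"
  have ex: "\<exists>c1 c2 c3. gcd (gcd c1 c2) c3 = 1 \<and> v1 = g * c1 \<and> v2 = g * c2 \<and> v3 = g * c3 \<and>
    nval (z0,v1,v2,v3) = c1^2 + c2^2 + c3^2"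
    using nval_explicit[OF v, of z0] unfolding g_def .
  obtain c1 c2 c3 where c: "gcd (gcd c1 c2) c3 = 1" "v1 = g * c1" "v2 = g * c2" "v3 = g * c3"
    "nval (z0,v1,v2,v3) = c1^2 + c2^2 + c3^2"
    using ex by metis
  define n where "n = nval Z"
  have nn: "n = c1^2 + c2^2 + c3^2" using c(5) Z n_def by simp
  have Nq: "z0^2 + g^2 * n = q^r"
    using N Z c(2-4) nn by (simp add: algebra_simps power_mult_distrib)
  have qr: "q dvd q^r" using r by (simp add: dvd_power)
  hence F1: "q dvd z0^2 + g^2 * n" using Nq by simp
  have F2: "\<not> (q dvd z0 \<and> q dvd g)"
    using nd Z c(2-4) by auto
  have ZZ: "qmul Z Z = (z0^2 - g^2 * n, 2*z0*g*c1, 2*z0*g*c2, 2*z0*g*c3)"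
    using Z c(2-4) nn by (simp add: algebra_simps power2_eq_square)
  have q2: "\<not> q dvd 2"
  proof
    assume "q dvd 2"
    hence "q \<le> 2" by (simp add: zdvd_imp_le)
    moreover have "q \<ge> 2" using q(1) prime_ge_2_int by blast
    ultimately have "q = 2" by simp
    with q(2) show False by simp
  qed
  have sq: "q dvd x^2 \<longleftrightarrow> q dvd x" for x using q(1) prime_dvd_power_iff by (metis zero_less_numeral)
  have A: "qdvd q (qmul Z Z) \<longleftrightarrow> q dvd n"
  proof
    assume qn: "q dvd n"
    hence "q dvd g^2 * n" by simp
    hence "q dvd z0^2" using F1 by (simp add: dvd_add_left_iff)
    hence qz: "q dvd z0" using sq by simp
    have "q dvd z0^2 - g^2 * n" using \<open>q dvd z0^2\<close> \<open>q dvd g^2 * n\<close> by simp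
    thus "qdvd q (qmul Z Z)" unfolding ZZ using qz by simp
  next
    assume dz: "qdvd q (qmul Z Z)"
    show "q dvd n"
    proof (rule ccontr)
      assume qn: "\<not> q dvd n"
      have nz: "\<not> q dvd z0"
      proof
        assume "q dvd z0"
        hence "q dvd z0^2" using sq by simp
        hence "q dvd g^2 * n" using F1 by (simp add: dvd_add_right_iff)
        hence "q dvd g" using qn q(1) sq prime_dvd_mult_iff by metis
        with F2 \<open>q dvd z0\<close> show False by simp
      qed
      have ng: "\<not> q dvd g"
      proof
        assume "q dvd g"
        hence "q dvd g^2 * n" using sq[of g] dvd_mult2 by blast
        hence "q dvd z0^2" using F1 by (simp add: dvd_add_left_iff)
        hence "q dvd z0" using sq by simp
        with F2 \<open>q dvd g\<close> show False by simp
      qed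
      have "\<not> (q dvd c1 \<and> q dvd c2 \<and> q dvd c3)"
      proof
        assume "q dvd c1 \<and> q dvd c2 \<and> q dvd c3"
        hence "q dvd gcd (gcd c1 c2) c3" by simp
        hence "q dvd 1" using c(1) by simp
        thus False using q(1) prime_ge_2_int[of q] by auto
      qed
      moreover have "\<not> q dvd 2 * z0 * g * c" if "\<not> q dvd c" for c
        using that q2 nz ng q(1) prime_dvd_mult_iff by metis
      ultimately show False using dz unfolding ZZ by auto
    qed
  qed
  have B: "Legendre (- n) q = 1 \<longleftrightarrow> \<not> q dvd n"
  proof (cases "q dvd n")
    case True
    hence "[- n = 0] (mod q)" by (simp add: cong_0_iff)
    thus ?thesis using True by (simp add: Legendre_def)
  next
    case False
    hence nc: "\<not> [- n = 0] (mod q)" by (simp add: cong_0_iff)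
    have ng: "\<not> q dvd g"
    proof
      assume "q dvd g"
      hence "q dvd g^2 * n" using sq[of g] dvd_mult2 by blast
      hence "q dvd z0^2" using F1 by (simp add: dvd_add_left_iff)
      hence "q dvd z0" using sq by simp
      with F2 \<open>q dvd g\<close> show False by simp
    qed
    have "coprime g q" using prime_imp_coprime[OF q(1) ng] by (simp add: coprime_commute)
    then obtain h where h: "[g * h = 1] (mod q)" using cong_solve_coprime_int by blast
    hence qh: "q dvd g * h - 1" by (simp add: cong_iff_dvd_diff)
    have "(z0*h)^2 + n = (z0^2 + g^2 * n) * h^2 - n * ((g*h - 1) * (g*h + 1))"
      by (simp add: algebra_simps power2_eq_square)
    moreover have "q dvd (z0^2 + g^2 * n) * h^2" using F1 by simp
    moreover have "q dvd n * ((g*h - 1) * (g*h + 1))" using qh by simp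
    ultimately have "q dvd (z0*h)^2 + n" by simp
    hence "[(z0*h)^2 = - n] (mod q)" by (simp add: cong_iff_dvd_diff)
    hence "QuadRes q (- n)" unfolding QuadRes_def by blast
    thus ?thesis using nc False by (simp add: Legendre_def)
  qed
  show ?thesis using A B n_def by simp
qed


lemma nval_prop:
  assumes "qsc m x = qsc n y" "m \<noteq> 0" "n \<noteq> 0"
    and x: "x = (x0,x1,x2,x3)" and y: "y = (y0,y1,y2,y3)" and yv: "(y1,y2,y3) \<noteq> (0,0,0)"
  shows "nval x = nval y"
proof -
  have e: "m*x1 = n*y1" "m*x2 = n*y2" "m*x3 = n*y3" using assms(1) x y by simp_all
  have xv: "(x1,x2,x3) \<noteq> (0,0,0)"
  proof
    assume "(x1,x2,x3) = (0,0,0)"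
    hence "n*y1 = 0" "n*y2 = 0" "n*y3 = 0" using e by auto
    thus False using yv assms(3) by simp
  qed
  define gx where "gx = gcd (gcd x1 x2) x3"
  define gy where "gy = gcd (gcd y1 y2) y3"
  have ex1: "\<exists>c1 c2 c3. gcd (gcd c1 c2) c3 = 1 \<and> x1 = gx * c1 \<and> x2 = gx * c2 \<and> x3 = gx * c3 \<and>
    nval (x0,x1,x2,x3) = c1^2 + c2^2 + c3^2"
    using nval_explicit[OF xv, of x0] unfolding gx_def .
  obtain c1 c2 c3 where c: "x1 = gx * c1" "x2 = gx * c2" "x3 = gx * c3"
    "nval (x0,x1,x2,x3) = c1^2 + c2^2 + c3^2" using ex1 by blast
  have ex2: "\<exists>c1 c2 c3. gcd (gcd c1 c2) c3 = 1 \<and> y1 = gy * c1 \<and> y2 = gy * c2 \<and> y3 = gy * c3 \<and>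
    nval (y0,y1,y2,y3) = c1^2 + c2^2 + c3^2"
    using nval_explicit[OF yv, of y0] unfolding gy_def .
  obtain d1 d2 d3 where d: "y1 = gy * d1" "y2 = gy * d2" "y3 = gy * d3"
    "nval (y0,y1,y2,y3) = d1^2 + d2^2 + d3^2" using ex2 by blast
  have gx0: "gx \<noteq> 0" using xv unfolding gx_def by auto
  have "\<bar>m\<bar> * gx = gcd (gcd (m*x1) (m*x2)) (m*x3)" unfolding gx_def by (rule gcd3_mult[symmetric])
  also have "\<dots> = gcd (gcd (n*y1) (n*y2)) (n*y3)" using e by simp
  also have "\<dots> = \<bar>n\<bar> * gy" unfolding gy_def by (rule gcd3_mult)
  finally have gg: "\<bar>m\<bar> * gx = \<bar>n\<bar> * gy" .
  have gg2: "(m * gx)^2 = (n * gy)^2"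
  proof -
    have "(m * gx)^2 = (\<bar>m\<bar> * gx)^2" by (simp add: power_mult_distrib)
    also have "\<dots> = (\<bar>n\<bar> * gy)^2" using gg by simp
    also have "\<dots> = (n * gy)^2" by (simp add: power_mult_distrib)
    finally show ?thesis .
  qed
  have K: "(m*gx)^2 \<noteq> 0" using assms(2) gx0 by simp
  have sq: "c^2 = d^2" if "m * (gx * c) = n * (gy * d)" for c d
  proof -
    have "(m*gx)^2 * c^2 = (n*gy)^2 * d^2" using arg_cong[OF that, of "\<lambda>t. t^2"]
      by (simp add: power_mult_distrib mult.assoc)
    hence "(m*gx)^2 * c^2 = (m*gx)^2 * d^2" using gg2 by simp
    thus ?thesis using K by simp
  qed
  have "m*(gx*c1) = n*(gy*d1)" using e(1) unfolding c(1) d(1) .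
  hence s1: "c1^2 = d1^2" by (rule sq)
  have "m*(gx*c2) = n*(gy*d2)" using e(2) unfolding c(2) d(2) .
  hence s2: "c2^2 = d2^2" by (rule sq)
  have "m*(gx*c3) = n*(gy*d3)" using e(3) unfolding c(3) d(3) .
  hence s3: "c3^2 = d3^2" by (rule sq)
  note s1 s2 s3
  thus ?thesis using c(4) d(4) x y by simp
qed

lemma wp_G:
  fixes cp dp :: "'a::field_char_0" and cl dl :: "'b::field_char_0"
  assumes "cp^2 + dp^2 + 1 = 0" "cl^2 + dl^2 + 1 = 0" "\<forall>x\<in>fst ` set ws. qnorm x \<noteq> 0"
  shows "G_eq (word_prod cp dp cl dl ws) (psi cp dp cl dl (Zw ws))"
proof -
  obtain k1 where k1: "k1 \<noteq> 0" "fcomp cp dp ws = smat k1 (psi_mat cp dp (Zw ws))"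
    using fcomp_Zw[OF assms(1,3)] by blast
  obtain k2 where k2: "k2 \<noteq> 0" "fcomp cl dl ws = smat k2 (psi_mat cl dl (Zw ws))"
    using fcomp_Zw[OF assms(2,3)] by blast
  show ?thesis unfolding G_eq_def word_prod_split psi_def fst_conv snd_conv k1(2) k2(2)
    using k1(1) k2(1) by (simp add: pgl_smat_left pgl_refl)
qed

lemma qprop_G: "qprop u v \<Longrightarrow> G_eq (psi (cp::'a::field_char_0) dp (cl::'b::field_char_0) dl u) (psi cp dp cl dl v)"
  by (simp add: G_eq_def psi_def qprop_pgl)

lemma qprop_sym: "qprop u v \<Longrightarrow> qprop v u"
  unfolding qprop_def by metis

lemma qprop_sq: "qprop u v \<Longrightarrow> qprop (qmul u u) (qmul v v)"
proof -
  assume "qprop u v"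
  then obtain m n where mn: "m \<noteq> 0" "n \<noteq> 0" "qsc m u = qsc n v" unfolding qprop_def by blast
  have "qsc (m*m) (qmul u u) = qmul (qsc m u) (qsc m u)" by (simp add: qmul_sc_left qmul_sc_right qsc_sc)
  also have "\<dots> = qmul (qsc n v) (qsc n v)" using mn(3) by simp
  also have "\<dots> = qsc (n*n) (qmul v v)" by (simp add: qmul_sc_left qmul_sc_right qsc_sc)
  finally show ?thesis unfolding qprop_def using mn(1,2) by (intro exI[of _ "m*m"] exI[of _ "n*n"]) simp
qed

lemma gmul_psi:
  fixes cp dp :: "'a::field_char_0" and cl dl :: "'b::field_char_0"
  assumes "cp^2 + dp^2 + 1 = 0" "cl^2 + dl^2 + 1 = 0"
  shows "gmul (psi cp dp cl dl x) (psi cp dp cl dl y) = psi cp dp cl dl (qmul x y)"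
  by (simp add: gmul_def psi_def psi_hom[OF assms(1)] psi_hom[OF assms(2)])

lemma G_word_psi:
  fixes cp dp :: "'a::field_char_0" and cl dl :: "'b::field_char_0"
  assumes "cp^2 + dp^2 + 1 = 0" "G_eq (psi cp dp cl dl u) (psi cp dp cl dl v)" "u \<noteq> (0,0,0,0)"
  shows "v \<noteq> (0,0,0,0) \<and> qprop u v"
  using pgl_qprop[OF assms(1) _ assms(3)] assms(2) by (simp add: G_eq_def psi_def)


lemma Zw_norm1:
  assumes "\<forall>x\<in>set (map fst ws). qnorm x = int q"
  shows "qnorm (Zw ws) = int q ^ length ws"
proof -
  from Zw_norm[of ws q q] assms obtain a b where "qnorm (Zw ws) = int q ^ a * int q ^ b" "a + b = length ws"
    by auto
  thus ?thesis by (metis power_add)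
qed

lemma wl_exact:
  fixes cp dp :: "'a::field_char_0" and cl dl :: "'b::field_char_0" and q q' :: nat
  assumes cd: "cp^2 + dp^2 + 1 = 0" "cl^2 + dl^2 + 1 = 0"
    and pr: "prime q" "prime q'" "q \<noteq> q'"
    and S: "\<forall>x\<in>S. qnorm x = int q \<or> qnorm x = int q'"
    and ws: "set (map fst ws) \<subseteq> S" "\<forall>x\<in>set (map fst ws). qnorm x = int q"
      "\<not> qdvd (int q) (Zw ws)" "G_eq (word_prod cp dp cl dl ws) g"
  shows "word_length cp dp cl dl S g = length ws"
  unfolding word_length_def
proof (rule Least_equality)
  show "\<exists>ws'. length ws' = length ws \<and> set (map fst ws') \<subseteq> S \<and> G_eq (word_prod cp dp cl dl ws') g"
    using ws by blast
next
  fix k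
  assume "\<exists>ws'. length ws' = k \<and> set (map fst ws') \<subseteq> S \<and> G_eq (word_prod cp dp cl dl ws') g"
  then obtain ws'' where w: "length ws'' = k" "set (map fst ws'') \<subseteq> S" "G_eq (word_prod cp dp cl dl ws'') g"
    by blast
  have q0: "int q \<noteq> 0" "int q' \<noteq> 0" using pr by auto
  have nz'': "\<forall>x\<in>fst ` set ws''. qnorm x \<noteq> 0"
  proof
    fix x assume "x \<in> fst ` set ws''"
    hence "x \<in> S" using w(2) by auto
    hence "qnorm x = int q \<or> qnorm x = int q'" using S by blast
    thus "qnorm x \<noteq> 0" using q0 by linarith
  qed
  have nz: "\<forall>x\<in>fst ` set ws. qnorm x \<noteq> 0" using ws(2) q0 by auto
  have G: "G_eq (psi cp dp cl dl (Zw ws'')) (psi cp dp cl dl (Zw ws))"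
  proof -
    have "G_eq (psi cp dp cl dl (Zw ws'')) (word_prod cp dp cl dl ws'')"
      using wp_G[OF cd nz''] by (rule G_sym)
    hence "G_eq (psi cp dp cl dl (Zw ws'')) g" using w(3) by (rule G_trans)
    hence "G_eq (psi cp dp cl dl (Zw ws'')) (word_prod cp dp cl dl ws)" using G_sym[OF ws(4)] by (rule G_trans)
    thus ?thesis using wp_G[OF cd nz] by (rule G_trans)
  qed
  obtain a b where ab: "qnorm (Zw ws'') = int q ^ a * int q' ^ b" "a + b = length ws''"
    using Zw_norm[of ws'' q q'] w(2) S by auto
  have Z0: "Zw ws'' \<noteq> (0,0,0,0)" using ab(1) q0 qnorm_eq0[of "Zw ws''"] by auto
  from G_word_psi[OF cd(1) G Z0] obtain m n where mn: "m \<noteq> 0" "n \<noteq> 0" "qsc m (Zw ws'') = qsc n (Zw ws)"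
    unfolding qprop_def by blast
  have "length ws \<le> a"
    by (rule lowerL[OF pr mn(2) mn(1) mn(3)[symmetric] Zw_norm1[OF ws(2)] ws(3) ab(1)])
  thus "length ws \<le> k" using ab(2) w(1) by simp
qed


lemma gens_norm: "x \<in> gens p l q \<Longrightarrow> qnorm x = int q"
  by (simp add: gens_def)

lemma core:
  fixes p l q q' :: nat and cp dp :: "'a::field_char_0" and cl dl :: "'b::field_char_0"
  assumes cd: "cp^2 + dp^2 + 1 = 0" "cl^2 + dl^2 + 1 = 0"
    and pr: "prime q" "prime q'" "q \<noteq> q'" "odd q"
    and S: "\<forall>y\<in>S. qnorm y = int q \<or> qnorm y = int q'"
    and GS: "gens p l q \<subseteq> S"
    and x: "in_generated cp dp cl dl (gens p l q) (psi cp dp cl dl x)" "\<not> G_eq (psi cp dp cl dl x) gone"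
  shows "((\<not> int q dvd nval x) \<longleftrightarrow>
           word_length cp dp cl dl S (gmul (psi cp dp cl dl x) (psi cp dp cl dl x)) = 2 * word_length cp dp cl dl S (psi cp dp cl dl x))
      \<and> (word_length cp dp cl dl S (gmul (psi cp dp cl dl x) (psi cp dp cl dl x)) = 2 * word_length cp dp cl dl S (psi cp dp cl dl x) \<longleftrightarrow>
           Legendre (- nval x) (int q) = 1)"
proof -
  let ?psi = "psi cp dp cl dl"
  let ?wl = "word_length cp dp cl dl S"
  have q0: "int q \<noteq> 0" using pr by auto
  from x(1) obtain ws where ws: "set (map fst ws) \<subseteq> gens p l q" "G_eq (word_prod cp dp cl dl ws) (?psi x)"
    unfolding in_generated_def by blast
  from reduce[OF pr(1) pr(4) ws(1)] obtain ws' m where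
    r1: "set (map fst ws') \<subseteq> gens p l q" "Zw ws = qsc (int q ^ m) (Zw ws')"
        "\<not> qdvd (int q) (Zw ws')" "length ws = length ws' + 2*m" by blast
  have nq: "\<forall>y\<in>set (map fst ws'). qnorm y = int q" using r1(1) gens_norm by blast
  have nzs: "\<forall>y\<in>fst ` set ws'. qnorm y \<noteq> 0" using nq q0 by simp
  have nz: "\<forall>y\<in>fst ` set ws. qnorm y \<noteq> 0" using ws(1) gens_norm q0 by fastforce
  define Z where "Z = Zw ws'"
  define r where "r = length ws'"
  have NZ: "qnorm Z = int q ^ r" unfolding Z_def r_def by (rule Zw_norm1[OF nq])
  have qp1: "qprop Z (Zw ws)" unfolding qprop_def Z_def r1(2) using q0
    by (intro exI[of _ "int q ^ m"] exI[of _ 1]) simp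
  have G1: "G_eq (word_prod cp dp cl dl ws') (?psi x)"
  proof -
    have "G_eq (word_prod cp dp cl dl ws') (?psi Z)" unfolding Z_def by (rule wp_G[OF cd nzs])
    hence "G_eq (word_prod cp dp cl dl ws') (?psi (Zw ws))" using qprop_G[OF qp1] by (rule G_trans)
    hence "G_eq (word_prod cp dp cl dl ws') (word_prod cp dp cl dl ws)" using G_sym[OF wp_G[OF cd nz]] by (rule G_trans)
    thus ?thesis using ws(2) by (rule G_trans)
  qed
  have wl1: "?wl (?psi x) = r" unfolding r_def
    by (rule wl_exact[OF cd pr(1-3) S]) (use r1(1) GS nq r1(3) G1 in \<open>auto simp: Z_def\<close>)
  have r_pos: "r \<ge> 1"
  proof (rule ccontr)
    assume "\<not> r \<ge> 1"
    hence "ws' = []" unfolding r_def by (cases ws') auto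
    hence "word_prod cp dp cl dl ws' = gone" by (simp add: word_prod_def)
    with G1 have "G_eq gone (?psi x)" by simp
    with x(2) G_sym show False by blast
  qed
  have Z0: "Z \<noteq> (0,0,0,0)" using NZ q0 qnorm_eq0[of Z] by auto
  have GZ: "G_eq (?psi Z) (?psi x)"
    using G_sym[OF wp_G[OF cd nzs]] G1 unfolding Z_def by (rule G_trans)
  from G_word_psi[OF cd(1) GZ Z0] have x0: "x \<noteq> (0,0,0,0)" and qZx: "qprop Z x" by auto
  define ws2 where "ws2 = ws' @ ws'"
  have Zws2: "Zw ws2 = qmul Z Z" unfolding ws2_def Z_def by (rule Zw_append)
  have ws2s: "set (map fst ws2) \<subseteq> gens p l q" using r1(1) by (simp add: ws2_def)
  from reduce[OF pr(1) pr(4) ws2s] obtain ws3 m2 where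
    r3: "set (map fst ws3) \<subseteq> gens p l q" "Zw ws2 = qsc (int q ^ m2) (Zw ws3)"
        "\<not> qdvd (int q) (Zw ws3)" "length ws2 = length ws3 + 2*m2" by blast
  have nq3: "\<forall>y\<in>set (map fst ws3). qnorm y = int q" using r3(1) gens_norm by blast
  have nzs3: "\<forall>y\<in>fst ` set ws3. qnorm y \<noteq> 0" using nq3 q0 by simp
  have qp3: "qprop (Zw ws3) (qmul Z Z)" unfolding qprop_def Zws2[symmetric] r3(2) using q0
    by (intro exI[of _ "int q ^ m2"] exI[of _ 1]) simp
  have G3: "G_eq (word_prod cp dp cl dl ws3) (gmul (?psi x) (?psi x))"
  proof -
    have "G_eq (word_prod cp dp cl dl ws3) (?psi (Zw ws3))" by (rule wp_G[OF cd nzs3])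
    hence "G_eq (word_prod cp dp cl dl ws3) (?psi (qmul Z Z))" using qprop_G[OF qp3] by (rule G_trans)
    hence "G_eq (word_prod cp dp cl dl ws3) (?psi (qmul x x))" using qprop_G[OF qprop_sq[OF qZx]] by (rule G_trans)
    thus ?thesis by (simp add: gmul_psi[OF cd])
  qed
  have wl2: "?wl (gmul (?psi x) (?psi x)) = length ws3"
    by (rule wl_exact[OF cd pr(1-3) S]) (use r3(1) GS nq3 r3(3) G3 in auto)
  have len3: "length ws3 + 2*m2 = 2*r" using r3(4) unfolding ws2_def r_def by simp
  have E: "?wl (gmul (?psi x) (?psi x)) = 2 * ?wl (?psi x) \<longleftrightarrow> \<not> qdvd (int q) (qmul Z Z)"
  proof (cases "m2 = 0")
    case True
    hence "qmul Z Z = Zw ws3" using r3(2) Zws2 by simp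
    thus ?thesis using r3(3) wl1 wl2 len3 True by simp
  next
    case False
    then obtain k where k: "m2 = Suc k" by (cases m2) auto
    have "qmul Z Z = qsc (int q) (qsc (int q ^ k) (Zw ws3))" using r3(2) Zws2 k by (simp add: qsc_sc)
    hence "qdvd (int q) (qmul Z Z)" by (simp add: qdvd_sc)
    thus ?thesis using wl1 wl2 len3 False by simp
  qed
  obtain z0 v1 v2 v3 where Zt: "Z = (z0,v1,v2,v3)" by (cases Z rule: prod_cases4)
  have vnz: "(v1,v2,v3) \<noteq> (0,0,0)"
  proof
    assume v0: "(v1,v2,v3) = (0,0,0)"
    hence z0: "z0 \<noteq> 0" using Z0 Zt by auto
    have pm: "psi_mat c d Z = smat (of_int z0) (mat 1)" for c d :: "'c::field"
      using v0 Zt by (simp add: mat2_eq psi_nth mat1_nth)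
    have "G_eq (?psi Z) gone"
      unfolding G_eq_def psi_def gone_def fst_conv snd_conv pm using z0
      by (simp add: pgl_smat_left pgl_refl)
    hence "G_eq (?psi x) gone" using G_sym[OF GZ] G_trans by blast
    with x(2) show False by simp
  qed
  obtain x0 x1 x2 x3 where xt: "x = (x0,x1,x2,x3)" by (cases x rule: prod_cases4)
  from qZx obtain a b where ab: "a \<noteq> 0" "b \<noteq> 0" "qsc a Z = qsc b x" unfolding qprop_def by blast
  have nv: "nval x = nval Z" using nval_prop[OF ab(3)[symmetric] ab(2) ab(1) xt Zt vnz] .
  have ntm: "(qdvd (int q) (qmul Z Z) \<longleftrightarrow> int q dvd nval Z) \<and> (Legendre (- nval Z) (int q) = 1 \<longleftrightarrow> \<not> int q dvd nval Z)"
    by (rule nt_main[OF _ _ Zt vnz _ r_pos r1(3)[folded Z_def]]) (use pr NZ in auto)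
  show ?thesis using E ntm nv by simp
qed


lemma A_gens: "A_tilde p l = gens p l p" by (simp add: A_tilde_def gens_def)
lemma B_gens: "B_tilde p l = gens p l l" by (simp add: B_tilde_def gens_def)

theorem lemma3p3:
  fixes p l :: nat
    and cp dp :: "'a::field_char_0"
    and cl dl :: "'b::field_char_0"
  assumes "prime p" and "prime l" and "odd p" and "odd l" and "p \<noteq> l"
    and "cp^2 + dp^2 + 1 = 0" and "cl^2 + dl^2 + 1 = 0"
  defines "wl \<equiv> word_length cp dp cl dl (A_tilde p l \<union> B_tilde p l)"
  shows
    "(\<forall>x. in_Gamma_tilde p l x
         \<and> in_generated cp dp cl dl (A_tilde p l) (psi cp dp cl dl x)
         \<and> \<not> G_eq (psi cp dp cl dl x) gone \<longrightarrow>
        ((\<not> int p dvd nval x) \<longleftrightarrow>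
           wl (gmul (psi cp dp cl dl x) (psi cp dp cl dl x)) = 2 * wl (psi cp dp cl dl x))
      \<and> (wl (gmul (psi cp dp cl dl x) (psi cp dp cl dl x)) = 2 * wl (psi cp dp cl dl x) \<longleftrightarrow>
           Legendre (- nval x) (int p) = 1))
   \<and> (\<forall>y. in_Gamma_tilde p l y
         \<and> in_generated cp dp cl dl (B_tilde p l) (psi cp dp cl dl y)
         \<and> \<not> G_eq (psi cp dp cl dl y) gone \<longrightarrow>
        ((\<not> int l dvd nval y) \<longleftrightarrow>
           wl (gmul (psi cp dp cl dl y) (psi cp dp cl dl y)) = 2 * wl (psi cp dp cl dl y))
      \<and> (wl (gmul (psi cp dp cl dl y) (psi cp dp cl dl y)) = 2 * wl (psi cp dp cl dl y) \<longleftrightarrow>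
           Legendre (- nval y) (int l) = 1))"
proof -
  have Sp: "\<forall>y\<in>A_tilde p l \<union> B_tilde p l. qnorm y = int p \<or> qnorm y = int l"
    by (auto simp: A_tilde_def B_tilde_def simp del: qnorm_simp)
  have Sl: "\<forall>y\<in>A_tilde p l \<union> B_tilde p l. qnorm y = int l \<or> qnorm y = int p"
    using Sp by blast
  have P1: "\<forall>x. in_Gamma_tilde p l x
         \<and> in_generated cp dp cl dl (A_tilde p l) (psi cp dp cl dl x)
         \<and> \<not> G_eq (psi cp dp cl dl x) gone \<longrightarrow>
        ((\<not> int p dvd nval x) \<longleftrightarrow>
           wl (gmul (psi cp dp cl dl x) (psi cp dp cl dl x)) = 2 * wl (psi cp dp cl dl x))
      \<and> (wl (gmul (psi cp dp cl dl x) (psi cp dp cl dl x)) = 2 * wl (psi cp dp cl dl x) \<longleftrightarrow>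
           Legendre (- nval x) (int p) = 1)"
  proof (intro allI impI)
    fix x
    assume h: "in_Gamma_tilde p l x \<and> in_generated cp dp cl dl (A_tilde p l) (psi cp dp cl dl x)
         \<and> \<not> G_eq (psi cp dp cl dl x) gone"
    show "((\<not> int p dvd nval x) \<longleftrightarrow>
           wl (gmul (psi cp dp cl dl x) (psi cp dp cl dl x)) = 2 * wl (psi cp dp cl dl x))
      \<and> (wl (gmul (psi cp dp cl dl x) (psi cp dp cl dl x)) = 2 * wl (psi cp dp cl dl x) \<longleftrightarrow>
           Legendre (- nval x) (int p) = 1)"
      unfolding wl_def
      by (rule core[OF assms(6,7) assms(1,2,5,3) Sp]) (use h in \<open>auto simp: A_gens B_gens\<close>)
  qed
  have P2: "\<forall>y. in_Gamma_tilde p l y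
         \<and> in_generated cp dp cl dl (B_tilde p l) (psi cp dp cl dl y)
         \<and> \<not> G_eq (psi cp dp cl dl y) gone \<longrightarrow>
        ((\<not> int l dvd nval y) \<longleftrightarrow>
           wl (gmul (psi cp dp cl dl y) (psi cp dp cl dl y)) = 2 * wl (psi cp dp cl dl y))
      \<and> (wl (gmul (psi cp dp cl dl y) (psi cp dp cl dl y)) = 2 * wl (psi cp dp cl dl y) \<longleftrightarrow>
           Legendre (- nval y) (int l) = 1)"
  proof (intro allI impI)
    fix y
    assume h: "in_Gamma_tilde p l y \<and> in_generated cp dp cl dl (B_tilde p l) (psi cp dp cl dl y)
         \<and> \<not> G_eq (psi cp dp cl dl y) gone"
    have ne: "l \<noteq> p" using assms(5) by simp
    show "((\<not> int l dvd nval y) \<longleftrightarrow>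
           wl (gmul (psi cp dp cl dl y) (psi cp dp cl dl y)) = 2 * wl (psi cp dp cl dl y))
      \<and> (wl (gmul (psi cp dp cl dl y) (psi cp dp cl dl y)) = 2 * wl (psi cp dp cl dl y) \<longleftrightarrow>
           Legendre (- nval y) (int l) = 1)"
      unfolding wl_def
      by (rule core[OF assms(6,7) assms(2,1) ne assms(4) Sl]) (use h in \<open>auto simp: A_gens B_gens\<close>)
  qed
  show ?thesis using P1 P2 by blast
qed

end
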